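(* Let $F$ be a real $p$-form. At the point $x$, in normal coordinates for $g$ centered at $x$, with the convention that $h_{ij}$ and all derivatives are evaluated at $x$ and indices run from $1$ to $n$, the following two formulas hold. For the Bochner Laplacian: $$\begin{aligned}((\nabla^*\nabla)'F)_{i_1\dots i_p}\sim{}&\sum_{j,k}h_{jk}\partial^2_{jk}F_{i_1\dots i_p}+\sum_{j,k}\big(\partial_jh_{jk}-\tfrac12\partial_kh_{jj}\big)\partial_kF_{i_1\dots i_p}\\&+\sum_{j,k}\sum_{s=1}^p(-1)^{s+1}\big(\partial_{i_s}h_{jk}+\partial_jh_{i_sk}-\partial_kh_{i_sj}\big)\partial_jF_{k\,i_1\dots\widehat{i_s}\dots i_p}\\&+\tfrac12\sum_{j,k}\sum_{s=1}^p(-1)^{s+1}\big(\partial^2_{ji_s}h_{jk}-\partial^2_{jk}h_{i_sj}+\partial^2_{jj}h_{i_sk}\big)F_{k\,i_1\dots\widehat{i_s}\dots i_p}.\end{aligned}$$ For the de Rham Laplacian: $$\begin{aligned}((\delta'd+d\delta')F)_{i_1\dots i_p}\sim{}&\sum_{j,k}h_{jk}\partial^2_{jk}F_{i_1\dots i_p}+\sum_{j,k}\big(\partial_jh_{jk}-\tfrac12\partial_kh_{jj}\big)\partial_kF_{i_1\dots i_p}\\&+\sum_{j,k}\sum_{s=1}^p(-1)^{s+1}\big(\partial_{i_s}h_{jk}+\partial_jh_{i_sk}-\partial_kh_{i_sj}\big)\partial_jF_{k\,i_1\dots\widehat{i_s}\dots i_p}\\&+\sum_{j,k}\sum_{s=1}^p(-1)^{s+1}\big(\partial^2_{i_sj}h_{jk}-\tfrac12\partial^2_{i_sk}h_{jj}\big)F_{k\,i_1\dots\widehat{i_s}\dots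 i_p}\\&+\sum_{j,k}\sum_{s=1}^p\sum_{t\ne s}(-1)^{s+t+1_{t>s}}\big(\partial^2_{i_sj}h_{i_tk}\big)F_{j\,k\,i_1\dots\widehat{i_t}\dots\widehat{i_s}\dots i_p}.\end{aligned}$$ Here $1_{t>s}$ equals $1$ if $t>s$ and $0$ otherwise, and a hat denotes omission of an index.
   Context: Let $(M,g)$ be a Riemannian $n$-manifold, $x\in M$, and $(x^1,\dots,x^n)$ normal coordinates for $g$ centered at $x$, with $\partial_i=\partial/\partial x^i$. Let $h$ be a smooth symmetric $(0,2)$-tensor field with components $h_{ij}$. For a metric-dependent operator $P$, write $P'=\frac{d}{d\alpha}\big|_{\alpha=0}P(g+\alpha h)$. Write $\delta=d^*$; since $d$ is metric-independent, $(d^*d+dd^* )'=\delta'd+d\delta'$. A real $p$-form is written $F=\sum F_{i_1\dots i_p}dx^{i_1}\otimes\dots\otimes dx^{i_p}$ with totally antisymmetric components. An expression $(\partial^\alpha h_{ij})(x)\,\partial^\beta F_{k_1\dots k_p}(x)$, with multi-indices $\alpha,\beta$, has total degree $|\alpha|+|\beta|$. $A\sim B$ means that at the point $x$, $A-B$ is a finite linear combination, with constant coefficients, of such expressions of total degree less than $2$. *)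

theory Defs
  imports "HOL-Analysis.Analysis"
begin

text \<open>Everything is in a coordinate chart U (an open subset of R^n, index type 'n),
 points are real^'n, the centre x of the normal coordinates is the origin 0.\<close>

type_synonym 'n metric = "real^'n \<Rightarrow> 'n \<Rightarrow> 'n \<Rightarrow> real"
type_synonym 'n form = "real^'n \<Rightarrow> 'n list \<Rightarrow> real"

definition pd :: "'n::finite \<Rightarrow> (real^'n \<Rightarrow> real) \<Rightarrow> real^'n \<Rightarrow> real" where
  "pd i f x = deriv (\<lambda>t. f (x + t *\<^sub>R axis i 1)) 0"

definition smooth_fun :: "(real^'n::finite \<Rightarrow> real) \<Rightarrow> (real^'n) set \<Rightarrow> bool" where
  "smooth_fun f U \<longleftrightarrow> (\<forall>ds::'n list. \<forall>x\<in>U. (foldr pd ds f) differentiable (at x))"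

definition riem_metric :: "'n::finite metric \<Rightarrow> (real^'n) set \<Rightarrow> bool" where
  "riem_metric g U \<longleftrightarrow>
     (\<forall>i j. smooth_fun (\<lambda>x. g x i j) U) \<and>
     (\<forall>x\<in>U. \<forall>i j. g x i j = g x j i) \<and>
     (\<forall>x\<in>U. \<forall>v::real^'n. v \<noteq> 0 \<longrightarrow> (\<Sum>i\<in>UNIV. \<Sum>j\<in>UNIV. g x i j * v$i * v$j) > 0)"

definition ginv :: "'n::finite metric \<Rightarrow> real^'n \<Rightarrow> 'n \<Rightarrow> 'n \<Rightarrow> real" where
  "ginv g x i j = matrix_inv (\<chi> a b. g x a b) $ i $ j"

definition christ :: "'n::finite metric \<Rightarrow> real^'n \<Rightarrow> 'n \<Rightarrow> 'n \<Rightarrow> 'n \<Rightarrow> real" where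
  "christ g x l j k = (1/2) * (\<Sum>m\<in>UNIV. ginv g x l m *
      (pd j (\<lambda>y. g y m k) x + pd k (\<lambda>y. g y j m) x - pd m (\<lambda>y. g y j k) x))"

text \<open>Normal coordinates for g centred at 0: g_{ij}(0) = \<delta>_{ij} and the radial lines
  t \<mapsto> t v are geodesics (geodesic equation \<Gamma>^l_{jk}(tv) v^j v^k = 0).\<close>
definition normal_coords :: "'n::finite metric \<Rightarrow> (real^'n) set \<Rightarrow> bool" where
  "normal_coords g U \<longleftrightarrow> open U \<and> 0 \<in> U \<and> riem_metric g U \<and>
     (\<forall>i j. g 0 i j = (if i = j then 1 else 0)) \<and>
     (\<forall>v::real^'n. \<forall>t::real. \<forall>l. t *\<^sub>R v \<in> U \<longrightarrow>
        (\<Sum>j\<in>UNIV. \<Sum>k\<in>UNIV. christ g (t *\<^sub>R v) l j k * v$j * v$k) = 0)"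

definition sym_tensor :: "'n::finite metric \<Rightarrow> (real^'n) set \<Rightarrow> bool" where
  "sym_tensor h U \<longleftrightarrow> (\<forall>i j. smooth_fun (\<lambda>x. h x i j) U) \<and> (\<forall>x\<in>U. \<forall>i j. h x i j = h x j i)"

definition pform :: "nat \<Rightarrow> 'n::finite form \<Rightarrow> (real^'n) set \<Rightarrow> bool" where
  "pform p F U \<longleftrightarrow>
     (\<forall>K. length K = p \<longrightarrow> smooth_fun (\<lambda>x. F x K) U) \<and>
     (\<forall>x\<in>U. \<forall>K. length K = p \<longrightarrow> (\<forall>a b. a < b \<and> b < p \<longrightarrow>
        F x (K[a := K!b, b := K!a]) = - F x K))"

definition del_at :: "nat \<Rightarrow> 'a list \<Rightarrow> 'a list" where
  "del_at s I = take s I @ drop (Suc s) I"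

definition del_two :: "nat \<Rightarrow> nat \<Rightarrow> 'a list \<Rightarrow> 'a list" where
  "del_two s t I = map (nth I) (filter (\<lambda>m. m \<noteq> s \<and> m \<noteq> t) [0..<length I])"

definition cov :: "'n::finite metric \<Rightarrow> 'n form \<Rightarrow> real^'n \<Rightarrow> 'n \<Rightarrow> 'n list \<Rightarrow> real" where
  "cov g F x k I = pd k (\<lambda>y. F y I) x
     - (\<Sum>s<length I. \<Sum>l\<in>UNIV. christ g x l k (I!s) * F x (I[s := l]))"

text \<open>Second covariant derivative (\<nabla>^2 F)_{j k I} = (\<nabla>(\<nabla>F))_{j (k I)}.\<close>
definition cov2 :: "'n::finite metric \<Rightarrow> 'n form \<Rightarrow> real^'n \<Rightarrow> 'n \<Rightarrow> 'n \<Rightarrow> 'n list \<Rightarrow> real" where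
  "cov2 g F x j k I = cov g (\<lambda>y L. cov g F y (hd L) (tl L)) x j (k # I)"

definition bochner :: "'n::finite metric \<Rightarrow> 'n form \<Rightarrow> real^'n \<Rightarrow> 'n list \<Rightarrow> real" where
  "bochner g F x I = - (\<Sum>j\<in>UNIV. \<Sum>k\<in>UNIV. ginv g x j k * cov2 g F x j k I)"

definition extd :: "'n::finite form \<Rightarrow> 'n form" where
  "extd F x I = (\<Sum>s<length I. (-1)^s * pd (I!s) (\<lambda>y. F y (del_at s I)) x)"

definition codiff :: "'n::finite metric \<Rightarrow> 'n form \<Rightarrow> 'n form" where
  "codiff g F x I = - (\<Sum>j\<in>UNIV. \<Sum>k\<in>UNIV. ginv g x j k * cov g F x k (j # I))"

definition gplus :: "'n::finite metric \<Rightarrow> 'n metric \<Rightarrow> real \<Rightarrow> 'n metric" where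
  "gplus g h a = (\<lambda>x i j. g x i j + a * h x i j)"

definition var :: "('n::finite metric \<Rightarrow> 'n form \<Rightarrow> 'n form) \<Rightarrow> 'n metric \<Rightarrow> 'n metric
     \<Rightarrow> 'n form \<Rightarrow> 'n form" where
  "var P g h F x I = deriv (\<lambda>a. P (gplus g h a) F x I) 0"

definition derham_var :: "'n::finite metric \<Rightarrow> 'n metric \<Rightarrow> 'n form \<Rightarrow> 'n form" where
  "derham_var g h F x I = var codiff g h (extd F) x I + extd (var codiff g h F) x I"

text \<open>Lower-order terms at 0: fixed constant-coefficient linear combination of
  h_{ij} F_K, h_{ij} \<partial>_l F_K, \<partial>_l h_{ij} F_K (total degree < 2).\<close>
definition lo_comb :: "nat \<Rightarrow> ('n::finite \<Rightarrow> 'n \<Rightarrow> 'n list \<Rightarrow> real)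
    \<Rightarrow> ('n \<Rightarrow> 'n \<Rightarrow> 'n \<Rightarrow> 'n list \<Rightarrow> real) \<Rightarrow> ('n \<Rightarrow> 'n \<Rightarrow> 'n \<Rightarrow> 'n list \<Rightarrow> real)
    \<Rightarrow> 'n metric \<Rightarrow> 'n form \<Rightarrow> real" where
  "lo_comb p c0 c1 c2 h F =
     (\<Sum>K\<in>{K. length K = p}. \<Sum>i\<in>UNIV. \<Sum>j\<in>UNIV.
        c0 i j K * h 0 i j * F 0 K
        + (\<Sum>l\<in>UNIV. c1 i j l K * h 0 i j * pd l (\<lambda>y. F y K) 0
               + c2 i j l K * pd l (\<lambda>y. h y i j) 0 * F 0 K))"

definition sim_at :: "(real^'n::finite) set \<Rightarrow> nat \<Rightarrow> ('n metric \<Rightarrow> 'n form \<Rightarrow> real)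
    \<Rightarrow> ('n metric \<Rightarrow> 'n form \<Rightarrow> real) \<Rightarrow> bool" where
  "sim_at U p A B \<longleftrightarrow> (\<exists>c0 c1 c2. \<forall>h F. sym_tensor h U \<and> pform p F U \<longrightarrow>
      A h F - B h F = lo_comb p c0 c1 c2 h F)"

text \<open>The common principal part (first three lines of both formulas), at 0, component I.\<close>
definition common_terms :: "'n::finite metric \<Rightarrow> 'n form \<Rightarrow> 'n list \<Rightarrow> real" where
  "common_terms h F I =
     (\<Sum>j\<in>UNIV. \<Sum>k\<in>UNIV. h 0 j k * pd j (pd k (\<lambda>y. F y I)) 0)
   + (\<Sum>j\<in>UNIV. \<Sum>k\<in>UNIV. (pd j (\<lambda>y. h y j k) 0 - (1/2) * pd k (\<lambda>y. h y j j) 0) * pd k (\<lambda>y. F y I) 0)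
   + (\<Sum>j\<in>UNIV. \<Sum>k\<in>UNIV. \<Sum>s<length I. (-1)^s *
        (pd (I!s) (\<lambda>y. h y j k) 0 + pd j (\<lambda>y. h y (I!s) k) 0 - pd k (\<lambda>y. h y (I!s) j) 0)
        * pd j (\<lambda>y. F y (k # del_at s I)) 0)"

text \<open>(positions s are 0-based, so (-1)^{s+1} for 1-based s becomes (-1)^s)\<close>
definition bochner_terms :: "'n::finite metric \<Rightarrow> 'n form \<Rightarrow> 'n list \<Rightarrow> real" where
  "bochner_terms h F I = common_terms h F I
   + (1/2) * (\<Sum>j\<in>UNIV. \<Sum>k\<in>UNIV. \<Sum>s<length I. (-1)^s *
        (pd j (pd (I!s) (\<lambda>y. h y j k)) 0 - pd j (pd k (\<lambda>y. h y (I!s) j)) 0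
         + pd j (pd j (\<lambda>y. h y (I!s) k)) 0) * F 0 (k # del_at s I))"

definition derham_terms :: "'n::finite metric \<Rightarrow> 'n form \<Rightarrow> 'n list \<Rightarrow> real" where
  "derham_terms h F I = common_terms h F I
   + (\<Sum>j\<in>UNIV. \<Sum>k\<in>UNIV. \<Sum>s<length I. (-1)^s *
        (pd (I!s) (pd j (\<lambda>y. h y j k)) 0 - (1/2) * pd (I!s) (pd k (\<lambda>y. h y j j)) 0)
        * F 0 (k # del_at s I))
   + (\<Sum>j\<in>UNIV. \<Sum>k\<in>UNIV. \<Sum>s<length I. \<Sum>t\<in>{..<length I} - {s}.
        (-1)^(s + t + (if t > s then 1 else 0)) *
        pd (I!s) (pd j (\<lambda>y. h y (I!t) k)) 0 * F 0 (j # k # del_two s t I))"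

end

theory Submission
  imports Defs
begin


lemma minv:
  fixes A :: "real^'n::finite^'n"
  assumes "invertible A"
  shows "A ** matrix_inv A = mat 1" "matrix_inv A ** A = mat 1"
  using someI_ex[OF assms[unfolded invertible_def]] unfolding matrix_inv_def by auto

lemma minv_cramer:
  fixes M :: "real^'n::finite^'n"
  assumes "invertible M"
  shows "matrix_inv M $ i $ j = det (\<chi> r c. if c = i then (if r = j then 1 else 0) else M $ r $ c) / det M"
proof -
  have d: "det M \<noteq> 0" using assms invertible_det_nz by blast
  have "M *v (matrix_inv M *v axis j 1) = axis j 1"
    by (simp add: matrix_vector_mul_assoc minv[OF assms])
  then have "matrix_inv M *v axis j 1 = (\<chi> k. det(\<chi> r c. if c=k then (axis j 1::real^'n)$r else M$r$c) / det M)"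
    using cramer[OF d] by blast
  then have "(matrix_inv M *v axis j 1) $ i = det(\<chi> r c. if c=i then (axis j 1::real^'n)$r else M$r$c) / det M"
    by simp
  moreover have "(matrix_inv M *v axis j 1) $ i = matrix_inv M $ i $ j"
    by (simp add: matrix_vector_mult_def axis_def if_distrib cong: if_cong)
  moreover have "(\<chi> r c. if c=i then (axis j 1::real^'n)$r else M$r$c) = (\<chi> r c. if c = i then (if r = j then 1 else 0) else M $ r $ c)"
    by (auto simp add: axis_def intro!: ext)
  ultimately show ?thesis by simp
qed

lemma differentiable_prod':
  fixes f :: "'i \<Rightarrow> real \<Rightarrow> real"
  shows "(\<And>i. i \<in> S \<Longrightarrow> f i differentiable (at t0)) \<Longrightarrow> (\<lambda>t. \<Prod>i\<in>S. f i t) differentiable (at t0)"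
proof (induction S rule: infinite_finite_induct)
  case (insert x F)
  then show ?case by (simp add: differentiable_mult)
qed auto

lemma det_differentiable:
  fixes A :: "real \<Rightarrow> real^'n::finite^'n"
  assumes "\<And>i j. (\<lambda>t. A t $ i $ j) differentiable (at t0)"
  shows "(\<lambda>t. det (A t)) differentiable (at t0)"
  unfolding det_def
  by (intro differentiable_sum ballI differentiable_mult differentiable_prod' differentiable_const assms finite_permutations finite)

lemma isCont_ev_ne:
  fixes f :: "real \<Rightarrow> real"
  assumes "isCont f t0" "f t0 \<noteq> 0"
  shows "eventually (\<lambda>t. f t \<noteq> 0) (nhds t0)"
proof -
  have "eventually (\<lambda>t. f t \<noteq> 0) (at t0)"
    using assms tendsto_imp_eventually_ne isCont_def by blast
  then show ?thesis using assms(2) eventually_nhds_conv_at by blast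
qed

lemma DERIV_minv:
  fixes A :: "real \<Rightarrow> real^'n::finite^'n" and A' :: "real^'n^'n"
  assumes dA: "\<And>i j. ((\<lambda>t. A t $ i $ j) has_real_derivative A' $ i $ j) (at t0)"
    and inv: "invertible (A t0)"
  shows "((\<lambda>t. matrix_inv (A t) $ i $ j) has_real_derivative
            (- (matrix_inv (A t0) ** A' ** matrix_inv (A t0))) $ i $ j) (at t0)"
proof -
  define B0 where "B0 = matrix_inv (A t0)"
  have dAd: "\<And>i j. (\<lambda>t. A t $ i $ j) differentiable (at t0)"
    using dA real_differentiable_def by blast
  have cdet: "isCont (\<lambda>t. det (A t)) t0"
    using det_differentiable[OF dAd] differentiable_imp_continuous_within by blast
  have "det (A t0) \<noteq> 0" using inv invertible_det_nz by blast
  then have evd: "eventually (\<lambda>t. det (A t) \<noteq> 0) (nhds t0)"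
    using isCont_ev_ne[OF cdet] by blast
  then have evi: "eventually (\<lambda>t. invertible (A t)) (nhds t0)"
    by (simp add: invertible_det_nz)
  have "\<exists>D. DERIV (\<lambda>t. matrix_inv (A t) $ i $ j) t0 :> D" for i j
  proof -
    let ?C = "\<lambda>t. det (\<chi> r c. if c = i then (if r = j then 1 else 0) else A t $ r $ c) / det (A t)"
    have "(\<lambda>t. det (\<chi> r c. if c = i then (if r = j then 1 else 0) else A t $ r $ c)) differentiable (at t0)"
      apply (rule det_differentiable)
      subgoal for r c by (cases "c = i") (auto simp: dAd)
      done
    then have "?C differentiable (at t0)"
      using det_differentiable[OF dAd] \<open>det (A t0) \<noteq> 0\<close> by (intro differentiable_divide) auto
    then have "DERIV ?C t0 :> deriv ?C t0"
      using DERIV_deriv_iff_real_differentiable by blast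
    moreover have "eventually (\<lambda>t. matrix_inv (A t) $ i $ j = ?C t) (nhds t0)"
      using evi by eventually_elim (rule minv_cramer)
    ultimately have "DERIV (\<lambda>t. matrix_inv (A t) $ i $ j) t0 :> deriv ?C t0"
      using DERIV_cong_ev[of t0 t0 "\<lambda>t. matrix_inv (A t) $ i $ j" ?C "deriv ?C t0" "deriv ?C t0"] by simp
    then show ?thesis by blast
  qed
  then obtain D where D: "\<And>i j. DERIV (\<lambda>t. matrix_inv (A t) $ i $ j) t0 :> D i j"
    by metis
  define Dm where "Dm = (\<chi> i j. D i j)"
  have key: "(A' ** B0 + A t0 ** Dm) $ i $ j = 0" for i j
  proof -
    have d1: "DERIV (\<lambda>t. \<Sum>k\<in>UNIV. A t $ i $ k * matrix_inv (A t) $ k $ j) t0 :>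
        (\<Sum>k\<in>UNIV. A' $ i $ k * matrix_inv (A t0) $ k $ j + D k j * A t0 $ i $ k)"
      by (intro DERIV_sum DERIV_mult dA D)
    have ev1: "eventually (\<lambda>t. (\<Sum>k\<in>UNIV. A t $ i $ k * matrix_inv (A t) $ k $ j) = mat 1 $ i $ j) (nhds t0)"
      using evi
    proof eventually_elim
      case (elim t)
      have "(A t ** matrix_inv (A t)) $ i $ j = mat 1 $ i $ j" using minv[OF elim] by simp
      then show ?case by (simp add: matrix_matrix_mult_def)
    qed
    have "DERIV (\<lambda>t. mat 1 $ i $ j) t0 :> 0" by simp
    then have "DERIV (\<lambda>t. \<Sum>k\<in>UNIV. A t $ i $ k * matrix_inv (A t) $ k $ j) t0 :> 0"
      using DERIV_cong_ev[of t0 t0 "\<lambda>t. \<Sum>k\<in>UNIV. A t $ i $ k * matrix_inv (A t) $ k $ j" "\<lambda>t. mat 1 $ i $ j" 0 0] ev1 by simp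
    with d1 have "(\<Sum>k\<in>UNIV. A' $ i $ k * matrix_inv (A t0) $ k $ j + D k j * A t0 $ i $ k) = 0"
      using DERIV_unique by blast
    then show ?thesis by (simp add: matrix_matrix_mult_def Dm_def B0_def sum.distrib mult.commute)
  qed
  then have "A' ** B0 + A t0 ** Dm = 0" by (simp add: vec_eq_iff)
  then have "B0 ** (A' ** B0 + A t0 ** Dm) = 0" by simp
  then have "B0 ** A' ** B0 + Dm = 0"
    by (simp add: matrix_add_ldistrib matrix_mul_assoc minv[OF inv] B0_def)
  then have "Dm = - (B0 ** A' ** B0)" by (simp add: eq_neg_iff_add_eq_0 add.commute)
  then have "Dm $ i $ j = (- (B0 ** A' ** B0)) $ i $ j" by simp
  then have Dij: "D i j = (- (B0 ** A' ** B0)) $ i $ j" by (simp add: Dm_def)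
  show ?thesis using D[of i j] unfolding Dij B0_def .
qed


lemma line_DERIV:
  fixes f :: "real^'n::finite \<Rightarrow> real"
  assumes "f differentiable (at (x + s *\<^sub>R v))"
  shows "((\<lambda>t. f (x + t *\<^sub>R v)) has_real_derivative frechet_derivative f (at (x + s *\<^sub>R v)) v) (at s)"
proof -
  let ?y = "x + s *\<^sub>R v"
  let ?f' = "frechet_derivative f (at ?y)"
  have df: "(f has_derivative ?f') (at ?y)" using assms frechet_derivative_works by blast
  have dl: "((\<lambda>t. x + t *\<^sub>R v) has_derivative (\<lambda>t. t *\<^sub>R v)) (at s)"
    by (auto intro!: derivative_eq_intros)
  have "((\<lambda>t. f (x + t *\<^sub>R v)) has_derivative (\<lambda>t. ?f' (t *\<^sub>R v))) (at s)"
    using has_derivative_compose[OF dl df] .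
  moreover have "linear ?f'" using df has_derivative_linear by blast
  then have "(\<lambda>t. ?f' (t *\<^sub>R v)) = (\<lambda>t. t * ?f' v)"
    by (auto simp: linear_scale)
  moreover have "(\<lambda>t. t * ?f' v) = (*) (?f' v)" by (auto simp: mult.commute)
  ultimately show ?thesis unfolding has_field_derivative_def by simp
qed

lemma pd_frechet:
  fixes f :: "real^'n::finite \<Rightarrow> real"
  assumes "f differentiable (at x)"
  shows "pd i f x = frechet_derivative f (at x) (axis i 1)"
  using line_DERIV[of f x 0 "axis i 1"] assms unfolding pd_def
  by (simp add: DERIV_imp_deriv)

lemma line_pd:
  fixes f :: "real^'n::finite \<Rightarrow> real"
  assumes "f differentiable (at (x + s *\<^sub>R axis i 1))"
  shows "((\<lambda>t. f (x + t *\<^sub>R axis i 1)) has_real_derivative pd i f (x + s *\<^sub>R axis i 1)) (at s)"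
  using line_DERIV[OF assms] pd_frechet[OF assms] by simp

lemma line_pd0:
  fixes f :: "real^'n::finite \<Rightarrow> real"
  assumes "f differentiable (at x)"
  shows "((\<lambda>t. f (x + t *\<^sub>R axis i 1)) has_real_derivative pd i f x) (at 0)"
  using line_pd[of f x 0 i] assms by simp

lemma pd_eqI:
  fixes f :: "real^'n::finite \<Rightarrow> real"
  assumes "((\<lambda>t. f (x + t *\<^sub>R axis i 1)) has_real_derivative D) (at 0)"
  shows "pd i f x = D"
  using assms unfolding pd_def by (rule DERIV_imp_deriv)

lemma ev_line:
  fixes x v :: "real^'n::finite"
  assumes "open U" "x \<in> U"
  shows "eventually (\<lambda>t. x + t *\<^sub>R v \<in> U) (nhds (0::real))"
proof -
  have "((\<lambda>t. x + t *\<^sub>R v) \<longlongrightarrow> x) (at (0::real))"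
    by (auto intro!: tendsto_eq_intros)
  then have "eventually (\<lambda>t. x + t *\<^sub>R v \<in> U) (at (0::real))"
    using assms topological_tendstoD by blast
  then show ?thesis unfolding eventually_nhds_conv_at using assms by simp
qed

lemma pd_cong:
  fixes f f' :: "real^'n::finite \<Rightarrow> real"
  assumes "open U" "x \<in> U" "\<And>y. y \<in> U \<Longrightarrow> f y = f' y"
  shows "pd i f x = pd i f' x"
proof -
  have "eventually (\<lambda>t. f (x + t *\<^sub>R axis i 1) = f' (x + t *\<^sub>R axis i 1)) (nhds (0::real))"
    using ev_line[OF assms(1,2), of "axis i 1"] by eventually_elim (simp add: assms(3))
  then show ?thesis unfolding pd_def by (rule deriv_cong_ev) simp
qed

lemma DERIV_cong_line:
  fixes f f' :: "real^'n::finite \<Rightarrow> real"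
  assumes "open U" "x \<in> U" "\<And>y. y \<in> U \<Longrightarrow> f y = f' y"
    and "((\<lambda>t. f' (x + t *\<^sub>R v)) has_real_derivative D) (at 0)"
  shows "((\<lambda>t. f (x + t *\<^sub>R v)) has_real_derivative D) (at 0)"
proof -
  have ev: "eventually (\<lambda>t. f (x + t *\<^sub>R v) = f' (x + t *\<^sub>R v)) (nhds (0::real))"
    using ev_line[OF assms(1,2), of v] by eventually_elim (simp add: assms(3))
  show ?thesis by (subst DERIV_cong_ev[OF refl ev refl]) (rule assms(4))
qed

lemma norm_two_axis:
  "norm (a *\<^sub>R (axis i 1 :: real^'n::finite) + b *\<^sub>R axis j 1) \<le> \<bar>a\<bar> + \<bar>b\<bar>"
  using norm_triangle_ineq[of "a *\<^sub>R (axis i 1 :: real^'n::finite)" "b *\<^sub>R axis j 1"] by simp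

lemma mixed_mvt:
  fixes f :: "real^'n::finite \<Rightarrow> real"
  assumes B: "ball x r \<subseteq> U"
    and df: "\<And>y. y \<in> U \<Longrightarrow> f differentiable (at y)"
    and dfi: "\<And>y. y \<in> U \<Longrightarrow> pd i f differentiable (at y)"
    and t: "0 < t" "2 * t < r"
  shows "\<exists>y. dist y x < 2 * t \<and>
     f (x + t *\<^sub>R axis i 1 + t *\<^sub>R axis j 1) - f (x + t *\<^sub>R axis i 1) - f (x + t *\<^sub>R axis j 1) + f x
       = t^2 * pd j (pd i f) y"
proof -
  let ?ei = "axis i 1 :: real^'n" and ?ej = "axis j 1 :: real^'n"
  have inU: "x + a *\<^sub>R ?ei + b *\<^sub>R ?ej \<in> U" if "0 \<le> a" "a \<le> t" "0 \<le> b" "b \<le> t" for a b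
  proof -
    have "norm (a *\<^sub>R ?ei + b *\<^sub>R ?ej) \<le> \<bar>a\<bar> + \<bar>b\<bar>" by (rule norm_two_axis)
    also have "\<dots> < r" using that t by simp
    finally have "dist (x + a *\<^sub>R ?ei + b *\<^sub>R ?ej) x < r" by (simp add: dist_norm add.assoc)
    then show ?thesis using B by (auto simp: dist_commute)
  qed
  define \<phi> where "\<phi> s = f ((x + t *\<^sub>R ?ej) + s *\<^sub>R ?ei) - f (x + s *\<^sub>R ?ei)" for s
  have "DERIV \<phi> s :> pd i f ((x + t *\<^sub>R ?ej) + s *\<^sub>R ?ei) - pd i f (x + s *\<^sub>R ?ei)"
    if "0 \<le> s" "s \<le> t" for s
  proof -
    have u1: "(x + t *\<^sub>R ?ej) + s *\<^sub>R ?ei \<in> U"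
      using inU[of s t] that t by (simp add: algebra_simps)
    have u2: "x + s *\<^sub>R ?ei \<in> U"
      using inU[of s 0] that t by simp
    show ?thesis unfolding \<phi>_def
      by (intro DERIV_diff line_pd df u1 u2)
  qed
  from MVT2[OF t(1) this] obtain \<xi> where xi: "0 < \<xi>" "\<xi> < t"
    "\<phi> t - \<phi> 0 = (t - 0) * (pd i f ((x + t *\<^sub>R ?ej) + \<xi> *\<^sub>R ?ei) - pd i f (x + \<xi> *\<^sub>R ?ei))"
    by blast
  define \<psi> where "\<psi> u = pd i f ((x + \<xi> *\<^sub>R ?ei) + u *\<^sub>R ?ej)" for u
  have "DERIV \<psi> u :> pd j (pd i f) ((x + \<xi> *\<^sub>R ?ei) + u *\<^sub>R ?ej)"
    if "0 \<le> u" "u \<le> t" for u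
  proof -
    have "(x + \<xi> *\<^sub>R ?ei) + u *\<^sub>R ?ej \<in> U"
      using inU[of \<xi> u] that xi by simp
    then show ?thesis unfolding \<psi>_def by (intro line_pd dfi)
  qed
  from MVT2[OF t(1) this] obtain \<eta> where eta: "0 < \<eta>" "\<eta> < t"
    "\<psi> t - \<psi> 0 = (t - 0) * pd j (pd i f) ((x + \<xi> *\<^sub>R ?ei) + \<eta> *\<^sub>R ?ej)"
    by blast
  let ?y = "(x + \<xi> *\<^sub>R ?ei) + \<eta> *\<^sub>R ?ej"
  have "norm (\<xi> *\<^sub>R ?ei + \<eta> *\<^sub>R ?ej) \<le> \<bar>\<xi>\<bar> + \<bar>\<eta>\<bar>" by (rule norm_two_axis)
  also have "\<dots> < 2 * t" using xi eta by simp
  finally have dy: "dist ?y x < 2 * t" by (simp add: dist_norm add.assoc)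
  have e1: "(x + t *\<^sub>R ?ej) + \<xi> *\<^sub>R ?ei = (x + \<xi> *\<^sub>R ?ei) + t *\<^sub>R ?ej" by (simp add: algebra_simps)
  have "f (x + t *\<^sub>R ?ei + t *\<^sub>R ?ej) - f (x + t *\<^sub>R ?ei) - f (x + t *\<^sub>R ?ej) + f x = \<phi> t - \<phi> 0"
    unfolding \<phi>_def by (simp add: algebra_simps)
  also have "\<dots> = t * (\<psi> t - \<psi> 0)" using xi(3) unfolding \<psi>_def e1 by simp
  also have "\<dots> = t^2 * pd j (pd i f) ?y" using eta(3) by (simp add: power2_eq_square)
  finally show ?thesis using dy by blast
qed

lemma schwarz:
  fixes f :: "real^'n::finite \<Rightarrow> real"
  assumes U: "open U" "x \<in> U"
    and df: "\<And>y. y \<in> U \<Longrightarrow> f differentiable (at y)"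
    and dfi: "\<And>y. y \<in> U \<Longrightarrow> pd i f differentiable (at y)"
    and dfj: "\<And>y. y \<in> U \<Longrightarrow> pd j f differentiable (at y)"
    and ci: "isCont (pd j (pd i f)) x" and cj: "isCont (pd i (pd j f)) x"
  shows "pd j (pd i f) x = pd i (pd j f) x"
proof (rule ccontr)
  assume ne: "pd j (pd i f) x \<noteq> pd i (pd j f) x"
  define \<epsilon> where "\<epsilon> = \<bar>pd j (pd i f) x - pd i (pd j f) x\<bar> / 2"
  have ep: "\<epsilon> > 0" using ne by (simp add: \<epsilon>_def)
  obtain r where r: "r > 0" "ball x r \<subseteq> U" using U openE by blast
  obtain d1 where d1: "d1 > 0" "\<And>y. dist y x < d1 \<Longrightarrow> dist (pd j (pd i f) y) (pd j (pd i f) x) < \<epsilon>"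
    using ci ep unfolding continuous_at_eps_delta by blast
  obtain d2 where d2: "d2 > 0" "\<And>y. dist y x < d2 \<Longrightarrow> dist (pd i (pd j f) y) (pd i (pd j f) x) < \<epsilon>"
    using cj ep unfolding continuous_at_eps_delta by blast
  define t where "t = min r (min d1 d2) / 3"
  have t: "0 < t" "2 * t < r" "2 * t < d1" "2 * t < d2" using r d1 d2 by (auto simp: t_def)
  obtain y1 where y1: "dist y1 x < 2 * t"
    "f (x + t *\<^sub>R axis i 1 + t *\<^sub>R axis j 1) - f (x + t *\<^sub>R axis i 1) - f (x + t *\<^sub>R axis j 1) + f x
       = t^2 * pd j (pd i f) y1"
    using mixed_mvt[OF r(2) df dfi t(1,2)] by blast
  obtain y2 where y2: "dist y2 x < 2 * t"
    "f (x + t *\<^sub>R axis j 1 + t *\<^sub>R axis i 1) - f (x + t *\<^sub>R axis j 1) - f (x + t *\<^sub>R axis i 1) + f x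
       = t^2 * pd i (pd j f) y2"
    using mixed_mvt[OF r(2) df dfj t(1,2)] by blast
  have "x + t *\<^sub>R axis j 1 + t *\<^sub>R axis i 1 = x + t *\<^sub>R axis i 1 + t *\<^sub>R axis j 1"
    by (simp add: algebra_simps)
  with y1(2) y2(2) have "t^2 * pd j (pd i f) y1 = t^2 * pd i (pd j f) y2" by (simp add: algebra_simps)
  then have eq: "pd j (pd i f) y1 = pd i (pd j f) y2" using t by simp
  have "dist (pd j (pd i f) y1) (pd j (pd i f) x) < \<epsilon>" using d1(2) y1(1) t by simp
  moreover have "dist (pd i (pd j f) y2) (pd i (pd j f) x) < \<epsilon>" using d2(2) y2(1) t by simp
  ultimately have "\<bar>pd j (pd i f) x - pd i (pd j f) x\<bar> < 2 * \<epsilon>"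
    using eq by (simp add: dist_real_def)
  then show False by (simp add: \<epsilon>_def)
qed


definition lo :: "(real^'n::finite) set \<Rightarrow> nat \<Rightarrow> ('n metric \<Rightarrow> 'n form \<Rightarrow> real) \<Rightarrow> bool" where
  "lo U p \<Phi> \<longleftrightarrow> (\<exists>c0 c1 c2. \<forall>h F. sym_tensor h U \<and> pform p F U \<longrightarrow> \<Phi> h F = lo_comb p c0 c1 c2 h F)"

lemma sim_at_lo: "sim_at U p A B \<longleftrightarrow> lo U p (\<lambda>h F. A h F - B h F)"
  unfolding sim_at_def lo_def by simp

lemma lo_comb_add:
  "lo_comb p (\<lambda>i j K. c0 i j K + d0 i j K) (\<lambda>i j l K. c1 i j l K + d1 i j l K) (\<lambda>i j l K. c2 i j l K + d2 i j l K) h F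
   = lo_comb p c0 c1 c2 h F + lo_comb p d0 d1 d2 h F"
  unfolding lo_comb_def by (simp add: algebra_simps sum.distrib)

lemma lo_comb_scale:
  "lo_comb p (\<lambda>i j K. a * c0 i j K) (\<lambda>i j l K. a * c1 i j l K) (\<lambda>i j l K. a * c2 i j l K) h F
   = a * lo_comb p c0 c1 c2 h F"
  unfolding lo_comb_def by (simp add: algebra_simps sum_distrib_left)

lemma lo_comb_zero: "lo_comb p (\<lambda>i j K. 0) (\<lambda>i j l K. 0) (\<lambda>i j l K. 0) h F = 0"
  unfolding lo_comb_def by simp

lemma lo_zero: "lo U p (\<lambda>h F. 0)"
  unfolding lo_def using lo_comb_zero by metis

lemma lo_add:
  assumes "lo U p \<Phi>" "lo U p \<Psi>"
  shows "lo U p (\<lambda>h F. \<Phi> h F + \<Psi> h F)"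
proof -
  obtain c0 c1 c2 where c: "\<forall>h F. sym_tensor h U \<and> pform p F U \<longrightarrow> \<Phi> h F = lo_comb p c0 c1 c2 h F"
    using assms(1) unfolding lo_def by blast
  obtain d0 d1 d2 where d: "\<forall>h F. sym_tensor h U \<and> pform p F U \<longrightarrow> \<Psi> h F = lo_comb p d0 d1 d2 h F"
    using assms(2) unfolding lo_def by blast
  show ?thesis unfolding lo_def
    by (rule exI[of _ "\<lambda>i j K. c0 i j K + d0 i j K"], rule exI[of _ "\<lambda>i j l K. c1 i j l K + d1 i j l K"],
        rule exI[of _ "\<lambda>i j l K. c2 i j l K + d2 i j l K"]) (simp add: lo_comb_add c d)
qed

lemma lo_scale:
  assumes "lo U p \<Phi>"
  shows "lo U p (\<lambda>h F. a * \<Phi> h F)"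
proof -
  obtain c0 c1 c2 where c: "\<forall>h F. sym_tensor h U \<and> pform p F U \<longrightarrow> \<Phi> h F = lo_comb p c0 c1 c2 h F"
    using assms(1) unfolding lo_def by blast
  show ?thesis unfolding lo_def
    by (rule exI[of _ "\<lambda>i j K. a * c0 i j K"], rule exI[of _ "\<lambda>i j l K. a * c1 i j l K"],
        rule exI[of _ "\<lambda>i j l K. a * c2 i j l K"]) (simp add: lo_comb_scale c)
qed

lemma lo_cong:
  assumes "lo U p \<Psi>" "\<And>h F. sym_tensor h U \<Longrightarrow> pform p F U \<Longrightarrow> \<Phi> h F = \<Psi> h F"
  shows "lo U p \<Phi>"
  using assms unfolding lo_def by metis

lemma lo_neg: "lo U p \<Phi> \<Longrightarrow> lo U p (\<lambda>h F. - \<Phi> h F)"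
  using lo_scale[of U p \<Phi> "-1"] by simp

lemma lo_diff: "lo U p \<Phi> \<Longrightarrow> lo U p \<Psi> \<Longrightarrow> lo U p (\<lambda>h F. \<Phi> h F - \<Psi> h F)"
  using lo_add[of U p \<Phi> "\<lambda>h F. - \<Psi> h F"] lo_neg[of U p \<Psi>] by simp

lemma lo_scale_r: "lo U p \<Phi> \<Longrightarrow> lo U p (\<lambda>h F. \<Phi> h F * a)"
  using lo_scale[of U p \<Phi> a] by (simp add: mult.commute)

lemma lo_sum:
  assumes "finite S" "\<And>x. x \<in> S \<Longrightarrow> lo U p (\<Phi> x)"
  shows "lo U p (\<lambda>h F. \<Sum>x\<in>S. \<Phi> x h F)"
  using assms
proof (induction S rule: finite_induct)
  case empty
  then show ?case by (simp add: lo_zero)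
next
  case (insert x S)
  then show ?case by (simp add: lo_add)
qed

lemma lo_sumU: "(\<And>x. lo U p (\<Phi> x)) \<Longrightarrow> lo U p (\<lambda>h F. \<Sum>x\<in>(UNIV::'a::finite set). \<Phi> x h F)"
  by (rule lo_sum) auto

lemma lo_sumL: "(\<And>x. x < (n::nat) \<Longrightarrow> lo U p (\<Phi> x)) \<Longrightarrow> lo U p (\<lambda>h F. \<Sum>x<n. \<Phi> x h F)"
  using lo_sum[of "{..<n}" U p \<Phi>] by simp

lemma ifm1: "(if c then 1 else 0) * (x::real) = (if c then x else 0)" by simp
lemma ifconj0: "(if c \<and> d then (x::real) else 0) = (if c then (if d then x else 0) else 0)" by simp
lemma ifm0: "(if c then (x::real) else 0) * y = (if c then x * y else 0)" by simp
lemma sum_if0: "(\<Sum>i\<in>S. if c then f i else (0::real)) = (if c then (\<Sum>i\<in>S. f i) else 0)" by simp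

lemma finite_len: "finite {K::'n::finite list. length K = p}"
  using finite_lists_length_eq[of "UNIV::'n set" p] by simp

lemma lo_atom0:
  fixes K :: "'n::finite list"
  assumes "length K = p"
  shows "lo U p (\<lambda>h F. h 0 a b * F 0 K)"
  unfolding lo_def
proof (intro exI allI impI)
  fix h :: "'n metric" and F :: "'n form"
  let ?c0 = "\<lambda>i j K'. if i = a \<and> j = b \<and> K' = K then 1 else (0::real)"
  have "lo_comb p ?c0 (\<lambda>i j l K. 0) (\<lambda>i j l K. 0) h F
      = (\<Sum>K'\<in>{K. length K = p}. \<Sum>i\<in>UNIV. \<Sum>j\<in>UNIV. ?c0 i j K' * h 0 i j * F 0 K')"
    unfolding lo_comb_def by simp
  also have "\<dots> = (\<Sum>K'\<in>{K. length K = p}. if K' = K then h 0 a b * F 0 K' else 0)"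
    by (intro sum.cong refl) (simp add: ifm1 ifconj0 ifm0 sum_if0 sum.delta)
  also have "\<dots> = h 0 a b * F 0 K" by (subst sum.delta[OF finite_len]) (simp add: assms)
  finally show "h 0 a b * F 0 K = lo_comb p ?c0 (\<lambda>i j l K. 0) (\<lambda>i j l K. 0) h F" by simp
qed

lemma lo_atom1:
  fixes K :: "'n::finite list"
  assumes "length K = p"
  shows "lo U p (\<lambda>h F. h 0 a b * pd l (\<lambda>y. F y K) 0)"
  unfolding lo_def
proof (intro exI allI impI)
  fix h :: "'n metric" and F :: "'n form"
  let ?c1 = "\<lambda>i j l' K'. if i = a \<and> j = b \<and> l' = l \<and> K' = K then 1 else (0::real)"
  have "lo_comb p (\<lambda>i j K. 0) ?c1 (\<lambda>i j l K. 0) h F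
      = (\<Sum>K'\<in>{K. length K = p}. \<Sum>i\<in>UNIV. \<Sum>j\<in>UNIV. \<Sum>l'\<in>UNIV. ?c1 i j l' K' * h 0 i j * pd l' (\<lambda>y. F y K') 0)"
    unfolding lo_comb_def by simp
  also have "\<dots> = (\<Sum>K'\<in>{K. length K = p}. if K' = K then h 0 a b * pd l (\<lambda>y. F y K') 0 else 0)"
    by (intro sum.cong refl) (simp add: ifm1 ifconj0 ifm0 sum_if0 sum.delta)
  also have "\<dots> = h 0 a b * pd l (\<lambda>y. F y K) 0" by (subst sum.delta[OF finite_len]) (simp add: assms)
  finally show "h 0 a b * pd l (\<lambda>y. F y K) 0 = lo_comb p (\<lambda>i j K. 0) ?c1 (\<lambda>i j l K. 0) h F" by simp
qed

lemma lo_atom2: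
  fixes K :: "'n::finite list"
  assumes "length K = p"
  shows "lo U p (\<lambda>h F. pd l (\<lambda>y. h y a b) 0 * F 0 K)"
  unfolding lo_def
proof (intro exI allI impI)
  fix h :: "'n metric" and F :: "'n form"
  let ?c2 = "\<lambda>i j l' K'. if i = a \<and> j = b \<and> l' = l \<and> K' = K then 1 else (0::real)"
  have "lo_comb p (\<lambda>i j K. 0) (\<lambda>i j l K. 0) ?c2 h F
      = (\<Sum>K'\<in>{K. length K = p}. \<Sum>i\<in>UNIV. \<Sum>j\<in>UNIV. \<Sum>l'\<in>UNIV. ?c2 i j l' K' * pd l' (\<lambda>y. h y i j) 0 * F 0 K')"
    unfolding lo_comb_def by simp
  also have "\<dots> = (\<Sum>K'\<in>{K. length K = p}. if K' = K then pd l (\<lambda>y. h y a b) 0 * F 0 K' else 0)"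
    by (intro sum.cong refl) (simp add: ifm1 ifconj0 ifm0 sum_if0 sum.delta)
  also have "\<dots> = pd l (\<lambda>y. h y a b) 0 * F 0 K" by (subst sum.delta[OF finite_len]) (simp add: assms)
  finally show "pd l (\<lambda>y. h y a b) 0 * F 0 K = lo_comb p (\<lambda>i j K. 0) (\<lambda>i j l K. 0) ?c2 h F" by simp
qed

lemma length_del_at[simp]: "s < length I \<Longrightarrow> length (del_at s I) = length I - 1"
  unfolding del_at_def by simp

lemma nth_del_at: "s < length I \<Longrightarrow> k < length I - 1 \<Longrightarrow> del_at s I ! k = (if k < s then I!k else I!(Suc k))"
  unfolding del_at_def by (auto simp: nth_append min_def)

lemma del_at_upd[simp]: "del_at s (I[s:=l]) = del_at s I"
  unfolding del_at_def by (simp add: take_update_cancel drop_update_cancel)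

lemma del_at_swap:
  assumes "Suc s < length L"
  shows "del_at s (L[s := L!(Suc s), Suc s := L!s]) = del_at (Suc s) L"
proof (rule nth_equalityI)
  show "length (del_at s (L[s := L!(Suc s), Suc s := L!s])) = length (del_at (Suc s) L)"
    using assms by simp
  fix k assume "k < length (del_at s (L[s := L!(Suc s), Suc s := L!s]))"
  then have k: "k < length L - 1" using assms by simp
  show "del_at s (L[s := L!(Suc s), Suc s := L!s]) ! k = del_at (Suc s) L ! k"
  proof -
    have "k < s \<or> k = s \<or> k > s" by arith
    then show ?thesis using assms k by (auto simp add: nth_del_at nth_list_update)
  qed
qed

lemma pform_swap:
  assumes F: "pform p F U" and x: "x \<in> U" and K: "length K = p" and ab: "a < b" "b < p"
  shows "F x (K[a := K!b, b := K!a]) = - F x K"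
  using F x K ab unfolding pform_def by blast

lemma pform_move:
  assumes F: "pform p F U" and x: "x \<in> U"
  shows "length (P @ L) = p \<Longrightarrow> s < length L \<Longrightarrow>
     F x (P @ L) = (-1)^s * F x (P @ (L!s # del_at s L))"
proof (induction s arbitrary: L)
  case 0
  then have "L = L!0 # del_at 0 L" unfolding del_at_def by (cases L) auto
  then show ?case by simp
next
  case (Suc s)
  let ?L' = "L[s := L!(Suc s), Suc s := L!s]"
  have l': "length (P @ ?L') = p" using Suc.prems by simp
  have upd: "(P @ L)[length P + s := (P @ L)!(length P + Suc s), length P + Suc s := (P @ L)!(length P + s)] = P @ ?L'"
    by (simp add: list_update_append nth_append)
  have "F x (P @ L) = - F x (P @ ?L')"
    using pform_swap[OF F x Suc.prems(1), of "length P + s" "length P + Suc s"] Suc.prems upd by simp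
  also have "F x (P @ ?L') = (-1)^s * F x (P @ (?L'!s # del_at s ?L'))"
    using Suc.IH[OF l'] Suc.prems by simp
  also have "?L'!s = L!(Suc s)" using Suc.prems by (simp add: nth_list_update)
  also have "del_at s ?L' = del_at (Suc s) L" using del_at_swap Suc.prems by simp
  finally show ?case by simp
qed

lemma pform_upd:
  assumes F: "pform p F U" and x: "x \<in> U" and I: "length I = p" "s < p"
  shows "F x (I[s:=l]) = (-1)^s * F x (l # del_at s I)"
  using pform_move[OF F x, of "[]" "I[s:=l]" s] I by simp

lemma pform_upd2:
  assumes F: "pform p F U" and x: "x \<in> U" and K: "length (j # K) = p" "s < length K"
  shows "F x (j # K[s:=l]) = (-1)^s * F x (j # l # del_at s K)"
  using pform_move[OF F x, of "[j]" "K[s:=l]" s] K by simp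

lemma pform_sw01:
  assumes F: "pform p F U" and x: "x \<in> U" and K: "length (a # b # K) = p"
  shows "F x (a # b # K) = - F x (b # a # K)"
  using pform_swap[OF F x K, of 0 1] K by simp


lemma smooth_d0: "smooth_fun f U \<Longrightarrow> y \<in> U \<Longrightarrow> f differentiable (at y)"
proof -
  assume "smooth_fun f U" "y \<in> U"
  then have "foldr pd [] f differentiable (at y)" unfolding smooth_fun_def by blast
  then show ?thesis by simp
qed
lemma smooth_d1: "smooth_fun f U \<Longrightarrow> y \<in> U \<Longrightarrow> pd k f differentiable (at y)"
proof -
  assume "smooth_fun f U" "y \<in> U"
  then have "foldr pd [k] f differentiable (at y)" unfolding smooth_fun_def by blast
  then show ?thesis by simp
qed

lemma md1: "x * (if c then 1 else 0) = (if c then x else (0::real))" by simp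
lemma md2: "(if c then 1 else 0) * x = (if c then x else (0::real))" by simp
lemmas dsimps = md1 md2 ifm0 sum_if0 sum.delta sum.delta' 
lemma smooth_d2: "smooth_fun f U \<Longrightarrow> y \<in> U \<Longrightarrow> pd j (pd k f) differentiable (at y)"
proof -
  assume "smooth_fun f U" "y \<in> U"
  then have "foldr pd [j,k] f differentiable (at y)" unfolding smooth_fun_def by blast
  then show ?thesis by simp
qed

lemma pd_add:
  fixes f g :: "real^'n::finite \<Rightarrow> real"
  assumes "f differentiable (at x)" "g differentiable (at x)"
  shows "pd i (\<lambda>y. f y + c * g y) x = pd i f x + c * pd i g x"
  by (rule pd_eqI) (intro DERIV_add DERIV_cmult line_pd0 assms)

lemma pd_cmult:
  fixes f :: "real^'n::finite \<Rightarrow> real"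
  assumes "f differentiable (at x)"
  shows "pd i (\<lambda>y. c * f y) x = c * pd i f x"
  by (rule pd_eqI) (intro DERIV_cmult line_pd0 assms)

lemma gplus0[simp]: "gplus g h 0 = g"
  unfolding gplus_def by simp

locale NC =
  fixes g :: "'n::finite metric" and U :: "(real^'n) set"
  assumes nc: "normal_coords g U"
begin

lemma openU: "open U" and zU: "0 \<in> U" and rg: "riem_metric g U"
  and g0: "g 0 i j = (if i = j then 1 else 0)"
  using nc unfolding normal_coords_def by auto

lemma gsm: "smooth_fun (\<lambda>x. g x i j) U" using rg unfolding riem_metric_def by blast
lemma gsym: "x \<in> U \<Longrightarrow> g x i j = g x j i" using rg unfolding riem_metric_def by blast

lemma gmat0: "(\<chi> a b. g 0 a b) = mat 1"
  by (simp add: vec_eq_iff g0 mat_def)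

lemma minv_mat1: "matrix_inv (mat 1 :: real^'n^'n) = mat 1"
proof -
  have i: "invertible (mat 1 :: real^'n^'n)" unfolding invertible_def by (metis matrix_mul_lid)
  have "matrix_inv (mat 1 :: real^'n^'n) = mat 1 ** matrix_inv (mat 1)" by simp
  also have "\<dots> = mat 1" using minv(1)[OF i] by simp
  finally show ?thesis .
qed

lemma ginv0: "ginv g 0 i j = (if i = j then 1 else 0)"
  unfolding ginv_def gmat0 minv_mat1 by (simp add: mat_def)

lemma ginv_inv:
  assumes "x \<in> U"
  shows "invertible (\<chi> a b. g x a b)"
proof -
  have pos: "\<And>v::real^'n. v \<noteq> 0 \<Longrightarrow> (\<Sum>i\<in>UNIV. \<Sum>j\<in>UNIV. g x i j * v$i * v$j) > 0"
    using rg assms unfolding riem_metric_def by blast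
  have "inj ((*v) (\<chi> a b. g x a b))"
  proof (rule injI)
    fix u v :: "real^'n" assume "(\<chi> a b. g x a b) *v u = (\<chi> a b. g x a b) *v v"
    then have z: "(\<chi> a b. g x a b) *v (u - v) = 0" by (simp add: matrix_vector_mult_diff_distrib)
    have "(\<Sum>i\<in>UNIV. \<Sum>j\<in>UNIV. g x i j * (u-v)$i * (u-v)$j) = (\<Sum>i\<in>UNIV. (u-v)$i * ((\<chi> a b. g x a b) *v (u - v))$i)"
      by (simp add: matrix_vector_mult_def sum_distrib_left algebra_simps)
    also have "\<dots> = 0" using z by simp
    finally show "u = v" using pos[of "u - v"] by force
  qed
  then show ?thesis
    unfolding invertible_left_inverse matrix_left_invertible_injective .
qed

lemma christ_sym: "x \<in> U \<Longrightarrow> christ g x l j k = christ g x l k j"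
proof -
  assume x: "x \<in> U"
  have "pd j (\<lambda>y. g y m k) x + pd k (\<lambda>y. g y j m) x - pd m (\<lambda>y. g y j k) x
      = pd k (\<lambda>y. g y m j) x + pd j (\<lambda>y. g y k m) x - pd m (\<lambda>y. g y k j) x" for m
  proof -
    have "pd j (\<lambda>y. g y m k) x = pd j (\<lambda>y. g y k m) x" by (rule pd_cong[OF openU x]) (simp add: gsym)
    moreover have "pd k (\<lambda>y. g y j m) x = pd k (\<lambda>y. g y m j) x" by (rule pd_cong[OF openU x]) (simp add: gsym)
    moreover have "pd m (\<lambda>y. g y j k) x = pd m (\<lambda>y. g y k j) x" by (rule pd_cong[OF openU x]) (simp add: gsym)
    ultimately show ?thesis by simp
  qed
  then show ?thesis unfolding christ_def by simp
qed

lemma christ0: "christ g 0 l j k = 0"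
proof -
  let ?C = "\<lambda>j k. christ g 0 l j k"
  have quad: "(\<Sum>j\<in>UNIV. \<Sum>k\<in>UNIV. ?C j k * v$j * v$k) = 0" for v :: "real^'n"
  proof -
    have all: "\<And>t l. t *\<^sub>R v \<in> U \<Longrightarrow> (\<Sum>j\<in>UNIV. \<Sum>k\<in>UNIV. christ g (t *\<^sub>R v) l j k * v$j * v$k) = 0"
      using nc unfolding normal_coords_def by blast
    show ?thesis using all[of 0 l] zU by simp
  qed
  have diag: "?C a a = 0" for a
    using quad[of "axis a 1"] by (simp add: axis_def dsimps)
  have off: "?C a b + ?C b a = 0" if "a \<noteq> b" for a b
  proof -
    have "(\<Sum>j\<in>UNIV. \<Sum>k\<in>UNIV. ?C j k * (axis a 1 + axis b 1 :: real^'n)$j * (axis a 1 + axis b 1 :: real^'n)$k)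
        = ?C a a + ?C a b + ?C b a + ?C b b"
      using that by (simp add: axis_def ring_distribs sum.distrib dsimps)
    then show ?thesis using quad[of "axis a 1 + axis b 1"] diag by simp
  qed
  have sy: "?C a b = ?C b a" for a b using christ_sym[OF zU] by simp
  have "?C j k = 0"
  proof (cases "j = k")
    case True then show ?thesis using diag by simp
  next
    case False
    then have "?C j k + ?C k j = 0" by (rule off)
    then show ?thesis using sy[of j k] by linarith
  qed
  then show ?thesis .
qed

lemma christ0_expl: "christ g 0 l j k = (1/2) * (pd j (\<lambda>y. g y l k) 0 + pd k (\<lambda>y. g y j l) 0 - pd l (\<lambda>y. g y j k) 0)"
  unfolding christ_def ginv0 by (simp add: dsimps)

lemma dgsym: "x \<in> U \<Longrightarrow> pd k (\<lambda>y. g y a b) x = pd k (\<lambda>y. g y b a) x"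
  by (rule pd_cong[OF openU]) (auto simp: gsym)

lemma dg0: "pd k (\<lambda>y. g y a b) 0 = 0"
proof -
  have "christ g 0 a k b + christ g 0 b k a = pd k (\<lambda>y. g y a b) 0"
    unfolding christ0_expl using dgsym[OF zU] by (simp add: algebra_simps)
  then show ?thesis using christ0 by simp
qed

end


definition hasd :: "'n::finite \<Rightarrow> (real^'n \<Rightarrow> real) \<Rightarrow> real \<Rightarrow> bool" where
  "hasd i f D \<longleftrightarrow> ((\<lambda>t. f (0 + t *\<^sub>R axis i 1)) has_real_derivative D) (at 0)"

lemma hasd_pd: "hasd i f D \<Longrightarrow> pd i f 0 = D"
  unfolding hasd_def by (rule pd_eqI)

lemma hasd_diffb: "f differentiable (at 0) \<Longrightarrow> hasd i f (pd i f 0)"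
  unfolding hasd_def by (rule line_pd0)

lemma hasd_const: "hasd i (\<lambda>y. c) 0"
  unfolding hasd_def by simp

lemma hasd_add: "hasd i f D \<Longrightarrow> hasd i g E \<Longrightarrow> hasd i (\<lambda>y. f y + g y) (D + E)"
  unfolding hasd_def by (rule DERIV_add)

lemma hasd_diff: "hasd i f D \<Longrightarrow> hasd i g E \<Longrightarrow> hasd i (\<lambda>y. f y - g y) (D - E)"
  unfolding hasd_def by (rule DERIV_diff)

lemma hasd_minus: "hasd i f D \<Longrightarrow> hasd i (\<lambda>y. - f y) (- D)"
  unfolding hasd_def by (rule DERIV_minus)

lemma hasd_mult: "hasd i f D \<Longrightarrow> hasd i g E \<Longrightarrow> hasd i (\<lambda>y. f y * g y) (D * g 0 + E * f 0)"
  unfolding hasd_def by (drule (1) DERIV_mult) simp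

lemma hasd_cmult: "hasd i f D \<Longrightarrow> hasd i (\<lambda>y. c * f y) (c * D)"
  unfolding hasd_def by (rule DERIV_cmult)

lemma hasd_sum: "(\<And>x. x \<in> S \<Longrightarrow> hasd i (f x) (D x)) \<Longrightarrow> hasd i (\<lambda>y. \<Sum>x\<in>S. f x y) (\<Sum>x\<in>S. D x)"
  unfolding hasd_def by (rule DERIV_sum)

lemma hasd_cong:
  assumes "open U" "0 \<in> U" "\<And>y. y \<in> U \<Longrightarrow> f y = f' y" "hasd i f' D"
  shows "hasd i f D"
  using DERIV_cong_line[OF assms(1,2), of f f' "axis i 1" D] assms(3,4) unfolding hasd_def by blast

lemma hasd_unique: "hasd i f D \<Longrightarrow> hasd i f E \<Longrightarrow> D = E"
  unfolding hasd_def by (rule DERIV_unique)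

lemma hasd_ginv:
  fixes G :: "'n::finite metric"
  assumes d: "\<And>r c. hasd i (\<lambda>y. G y r c) (D $ r $ c)" and inv: "invertible (\<chi> r c. G 0 r c)"
  shows "hasd i (\<lambda>y. ginv G y l m) ((- (matrix_inv (\<chi> r c. G 0 r c) ** D ** matrix_inv (\<chi> r c. G 0 r c))) $ l $ m)"
proof -
  let ?A = "\<lambda>t. (\<chi> r c. G (0 + t *\<^sub>R axis i 1) r c)"
  have "((\<lambda>t. matrix_inv (?A t) $ l $ m) has_real_derivative
      (- (matrix_inv (?A 0) ** D ** matrix_inv (?A 0))) $ l $ m) (at 0)"
    by (rule DERIV_minv) (use d inv in \<open>auto simp: hasd_def\<close>)
  then show ?thesis unfolding hasd_def ginv_def by simp
qed


lemma DERIV_eq: "DERIV f x :> D \<Longrightarrow> D = E \<Longrightarrow> DERIV f x :> E" by simp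
lemma hasd_eq: "hasd i f D \<Longrightarrow> D = E \<Longrightarrow> hasd i f E" by simp

lemma DERIV_ev: "eventually (\<lambda>a. f a = f' a) (nhds x) \<Longrightarrow> DERIV f' x :> D \<Longrightarrow> DERIV f x :> D"
  using DERIV_cong_ev[OF refl] by blast

lemmas DR = DERIV_sum DERIV_mult DERIV_add DERIV_diff DERIV_minus DERIV_const DERIV_ident
lemmas HR = hasd_sum hasd_mult hasd_add hasd_diff hasd_minus hasd_const

locale NCH = NC g U for g :: "'n::finite metric" and U +
  fixes h :: "'n metric" and F :: "'n form" and p :: nat
  assumes st: "sym_tensor h U" and pf: "pform p F U"
begin

abbreviation "G a \<equiv> gplus g h a"

lemma hsm: "smooth_fun (\<lambda>x. h x i j) U" using st unfolding sym_tensor_def by blast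
lemma hsym: "x \<in> U \<Longrightarrow> h x i j = h x j i" using st unfolding sym_tensor_def by blast
lemma Fsm: "length K = p \<Longrightarrow> smooth_fun (\<lambda>x. F x K) U" using pf unfolding pform_def by blast

definition csh :: "'n \<Rightarrow> 'n \<Rightarrow> 'n \<Rightarrow> real" where
  "csh m j k = pd j (\<lambda>y. h y m k) 0 + pd k (\<lambda>y. h y j m) 0 - pd m (\<lambda>y. h y j k) 0"

definition ddcs :: "'n metric \<Rightarrow> 'n \<Rightarrow> 'n \<Rightarrow> 'n \<Rightarrow> 'n \<Rightarrow> real" where
  "ddcs f j r k m = pd j (pd k (\<lambda>y. f y r m)) 0 + pd j (pd m (\<lambda>y. f y k r)) 0 - pd j (pd r (\<lambda>y. f y k m)) 0"

lemma G_diff: "y \<in> U \<Longrightarrow> (\<lambda>y. G a y r c) differentiable (at y)"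
  unfolding gplus_def using smooth_d0[OF gsm] smooth_d0[OF hsm]
  by (intro differentiable_add differentiable_mult differentiable_const) auto

lemma linG: "y \<in> U \<Longrightarrow> pd k (\<lambda>y. G a y r c) y = pd k (\<lambda>y. g y r c) y + a * pd k (\<lambda>y. h y r c) y"
  unfolding gplus_def by (rule pd_add) (auto intro: smooth_d0[OF gsm] smooth_d0[OF hsm])

lemma linG0: "pd k (\<lambda>y. G a y r c) 0 = a * pd k (\<lambda>y. h y r c) 0"
  using linG[OF zU] dg0 by simp

lemma hasd_G: "hasd j (\<lambda>y. G a y r c) (a * pd j (\<lambda>y. h y r c) 0)"
  using hasd_diffb[OF G_diff[OF zU], of j a r c] linG0 by simp

lemma hasd_dG: "hasd j (\<lambda>y. pd k (\<lambda>y. G a y r c) y) (pd j (pd k (\<lambda>y. g y r c)) 0 + a * pd j (pd k (\<lambda>y. h y r c)) 0)"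
proof (rule hasd_cong[OF openU zU])
  show "pd k (\<lambda>y. G a y r c) y = pd k (\<lambda>y. g y r c) y + a * pd k (\<lambda>y. h y r c) y" if "y \<in> U" for y
    using linG[OF that] .
  show "hasd j (\<lambda>y. pd k (\<lambda>y. g y r c) y + a * pd k (\<lambda>y. h y r c) y) (pd j (pd k (\<lambda>y. g y r c)) 0 + a * pd j (pd k (\<lambda>y. h y r c)) 0)"
    by (intro hasd_add hasd_cmult hasd_diffb smooth_d1[OF gsm zU] smooth_d1[OF hsm zU])
qed

lemma christG0: "christ (G a) 0 l j k = (1/2) * (\<Sum>m\<in>UNIV. ginv (G a) 0 l m * (a * csh m j k))"
  unfolding christ_def linG0 csh_def by (simp add: algebra_simps)

lemma D1: "DERIV (\<lambda>a. ginv (G a) 0 l m) 0 :> - h 0 l m"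
proof -
  let ?A = "\<lambda>a. (\<chi> r c. G a 0 r c)"
  have A0: "?A 0 = mat 1" using gmat0 by simp
  have inv: "invertible (?A 0)" unfolding A0 invertible_def by (metis matrix_mul_lid)
  have "DERIV (\<lambda>a. matrix_inv (?A a) $ l $ m) 0 :> (- (matrix_inv (?A 0) ** (\<chi> r c. h 0 r c) ** matrix_inv (?A 0))) $ l $ m"
  proof (rule DERIV_minv[of ?A _ 0, OF _ inv])
    fix i j
    show "DERIV (\<lambda>a. ?A a $ i $ j) 0 :> (\<chi> r c. h 0 r c) $ i $ j"
      unfolding gplus_def by (auto intro!: DERIV_eq[OF DERIV_add[OF DERIV_const DERIV_cmult_right[OF DERIV_ident]]])
  qed
  then show ?thesis unfolding ginv_def A0 minv_mat1 by simp
qed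

lemma ginvG0: "ginv (G 0) 0 l m = (if l = m then 1 else 0)"
  using ginv0 by simp

lemma D2: "DERIV (\<lambda>a. christ (G a) 0 l j k) 0 :> (1/2) * csh l j k"
  unfolding christG0
  apply (rule DERIV_eq)
   apply (rule D1 DR)+
  apply (simp add: ginv0 dsimps)
  done


lemma evinv: "eventually (\<lambda>a. invertible (\<chi> r c. G a 0 r c)) (nhds 0)"
proof -
  let ?A = "\<lambda>a. (\<chi> r c. G a 0 r c)"
  have "(\<lambda>a. det (?A a)) differentiable (at 0)"
    by (rule det_differentiable) (auto simp: gplus_def intro!: differentiable_add differentiable_mult)
  then have c: "isCont (\<lambda>a. det (?A a)) 0" using differentiable_imp_continuous_within by blast
  have "det (?A 0) \<noteq> 0" using gmat0 by simp
  then have "eventually (\<lambda>a. det (?A a) \<noteq> 0) (nhds 0)" using isCont_ev_ne[OF c] by blast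
  then show ?thesis by (simp add: invertible_det_nz)
qed

lemma inv0: "invertible (\<chi> r c. G 0 0 r c)"
  using gmat0 unfolding invertible_def by (metis gplus0 matrix_mul_lid)

lemma hasd_ginvG:
  assumes "invertible (\<chi> r c. G a 0 r c)"
  shows "hasd j (\<lambda>y. ginv (G a) y l r)
     (- (\<Sum>v\<in>UNIV. (\<Sum>u\<in>UNIV. ginv (G a) 0 l u * (a * pd j (\<lambda>y. h y u v) 0)) * ginv (G a) 0 v r))"
proof -
  have "hasd j (\<lambda>y. ginv (G a) y l r) ((- (matrix_inv (\<chi> r c. G a 0 r c) ** (\<chi> r c. a * pd j (\<lambda>y. h y r c) 0) ** matrix_inv (\<chi> r c. G a 0 r c))) $ l $ r)"
    by (rule hasd_ginv[of _ "G a", OF _ assms]) (simp add: hasd_G)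
  then show ?thesis by (simp add: matrix_matrix_mult_def ginv_def)
qed

definition E3 :: "real \<Rightarrow> 'n \<Rightarrow> 'n \<Rightarrow> 'n \<Rightarrow> 'n \<Rightarrow> real" where
  "E3 a j l k m = (1/2) * (\<Sum>r\<in>UNIV.
      (- (\<Sum>v\<in>UNIV. (\<Sum>u\<in>UNIV. ginv (G a) 0 l u * (a * pd j (\<lambda>y. h y u v) 0)) * ginv (G a) 0 v r)) * (a * csh r k m)
      + ginv (G a) 0 l r * (ddcs g j r k m + a * ddcs h j r k m))"

lemma hasd_christ:
  assumes "invertible (\<chi> r c. G a 0 r c)"
  shows "hasd j (\<lambda>y. christ (G a) y l k m) (E3 a j l k m)"
  unfolding christ_def E3_def
  apply (rule hasd_eq)
   apply (rule hasd_ginvG[OF assms] hasd_dG hasd_cmult HR)+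
  apply (simp add: linG0 csh_def ddcs_def algebra_simps)
  done

definition W :: "'n \<Rightarrow> 'n \<Rightarrow> 'n \<Rightarrow> 'n \<Rightarrow> real" where
  "W j l k m = (1/2) * (ddcs h j l k m - (\<Sum>r\<in>UNIV. h 0 l r * ddcs g j r k m))"

lemma D3: "DERIV (\<lambda>a. E3 a j l k m) 0 :> W j l k m"
  unfolding E3_def W_def
  apply (rule DERIV_eq)
   apply (rule D1 DR)+
  apply (simp add: ginv0 dsimps algebra_simps sum_subtractf)
  done


lemma hasdF: "length K = p \<Longrightarrow> hasd j (\<lambda>y. F y K) (pd j (\<lambda>y. F y K) 0)"
  by (rule hasd_diffb) (rule smooth_d0[OF Fsm zU])

lemma hasdF1: "length K = p \<Longrightarrow> hasd j (pd k (\<lambda>y. F y K)) (pd j (pd k (\<lambda>y. F y K)) 0)"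
  by (rule hasd_diffb) (rule smooth_d1[OF Fsm zU])

definition CV :: "real \<Rightarrow> 'n \<Rightarrow> 'n \<Rightarrow> 'n list \<Rightarrow> real" where
  "CV a j k I = pd j (pd k (\<lambda>y. F y I)) 0
     - (\<Sum>s<length I. \<Sum>l\<in>UNIV. E3 a j l k (I!s) * F 0 (I[s:=l]) + christ (G a) 0 l k (I!s) * pd j (\<lambda>y. F y (I[s:=l])) 0)"

lemma hasd_cov:
  assumes "invertible (\<chi> r c. G a 0 r c)" "length I = p"
  shows "hasd j (\<lambda>y. cov (G a) F y k I) (CV a j k I)"
  unfolding cov_def CV_def
  apply (rule hasd_eq)
   apply (rule hasd_christ[OF assms(1)] hasdF1[OF assms(2)] hasdF HR | simp add: assms(2))+
  apply (simp add: algebra_simps)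
  done

lemma pd_cov: "invertible (\<chi> r c. G a 0 r c) \<Longrightarrow> length I = p \<Longrightarrow> pd j (\<lambda>y. cov (G a) F y k I) 0 = CV a j k I"
  by (rule hasd_pd, rule hasd_cov)

lemma D5: "length I = p \<Longrightarrow> DERIV (\<lambda>a. pd j (\<lambda>y. cov (G a) F y k I) 0) 0 :>
   - (\<Sum>s<length I. \<Sum>l\<in>UNIV. W j l k (I!s) * F 0 (I[s:=l]) + (1/2) * csh l k (I!s) * pd j (\<lambda>y. F y (I[s:=l])) 0)"
  apply (rule DERIV_ev[where f' = "\<lambda>a. CV a j k I"])
  using evinv apply eventually_elim apply (simp add: pd_cov)
  unfolding CV_def
  apply (rule DERIV_eq)
   apply (rule D3 D2 DR)+
  apply (simp add: christ0 algebra_simps)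
  done

lemma D4: "DERIV (\<lambda>a. cov (G a) F 0 k J) 0 :> - (\<Sum>s<length J. \<Sum>l\<in>UNIV. (1/2) * csh l k (J!s) * F 0 (J[s:=l]))"
  unfolding cov_def
  apply (rule DERIV_eq)
   apply (rule D2 DR)+
  apply (simp add: algebra_simps)
  done

lemma cov_g0: "cov g F 0 k J = pd k (\<lambda>y. F y J) 0"
  unfolding cov_def by (simp add: christ0)

lemma cov2_unf: "cov2 G' F x j k I = pd j (\<lambda>y. cov G' F y k I) x
   - (\<Sum>s<Suc (length I). \<Sum>l\<in>UNIV. christ G' x l j ((k#I)!s) * cov G' F x (hd ((k#I)[s:=l])) (tl ((k#I)[s:=l])))"
  unfolding cov2_def cov_def[of G' "\<lambda>y L. cov G' F y (hd L) (tl L)"] by simp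

definition D6v :: "'n \<Rightarrow> 'n \<Rightarrow> 'n list \<Rightarrow> real" where
  "D6v j k I = - (\<Sum>s<length I. \<Sum>l\<in>UNIV. W j l k (I!s) * F 0 (I[s:=l]) + (1/2) * csh l k (I!s) * pd j (\<lambda>y. F y (I[s:=l])) 0)
     - (\<Sum>s<Suc (length I). \<Sum>l\<in>UNIV. (1/2) * csh l j ((k#I)!s) * pd (hd ((k#I)[s:=l])) (\<lambda>y. F y (tl ((k#I)[s:=l]))) 0)"

lemma D6: "length I = p \<Longrightarrow> DERIV (\<lambda>a. cov2 (G a) F 0 j k I) 0 :> D6v j k I"
  unfolding cov2_unf D6v_def
  apply (rule DERIV_eq)
   apply (rule D5 D4 D2 DR | assumption)+
  apply (simp add: christ0 cov_g0 algebra_simps)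
  done

lemma cov2_g0: "length I = p \<Longrightarrow> cov2 g F 0 j k I = pd j (pd k (\<lambda>y. F y I)) 0
     - (\<Sum>s<length I. \<Sum>l\<in>UNIV. (1/2) * ddcs g j l k (I!s) * F 0 (I[s:=l]))"
proof -
  assume I: "length I = p"
  have "cov2 g F 0 j k I = pd j (\<lambda>y. cov g F y k I) 0"
    unfolding cov2_unf by (simp add: christ0)
  also have "\<dots> = CV 0 j k I" using pd_cov[OF inv0 I] by simp
  also have "\<dots> = pd j (pd k (\<lambda>y. F y I)) 0
     - (\<Sum>s<length I. \<Sum>l\<in>UNIV. (1/2) * ddcs g j l k (I!s) * F 0 (I[s:=l]))"
    unfolding CV_def E3_def by (simp add: christ0 ginv0 dsimps)
  finally show ?thesis .
qed

lemma D7: "length I = p \<Longrightarrow> DERIV (\<lambda>a. bochner (G a) F 0 I) 0 :>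
   (\<Sum>j\<in>UNIV. \<Sum>k\<in>UNIV. h 0 j k * cov2 g F 0 j k I) - (\<Sum>j\<in>UNIV. D6v j j I)"
  unfolding bochner_def
  apply (rule DERIV_eq)
   apply (rule D1 D6 DR | assumption)+
  apply (simp add: ginv0 dsimps sum_negf sum.distrib sum_subtractf algebra_simps)
  done

lemma var_bochner: "length I = p \<Longrightarrow> var bochner g h F 0 I =
   (\<Sum>j\<in>UNIV. \<Sum>k\<in>UNIV. h 0 j k * cov2 g F 0 j k I) - (\<Sum>j\<in>UNIV. D6v j j I)"
  unfolding var_def by (rule DERIV_imp_deriv, rule D7)

end


context NCH
begin

lemma dhsym: "pd x (\<lambda>y. h y a b) 0 = pd x (\<lambda>y. h y b a) 0"
  by (rule pd_cong[OF openU zU]) (simp add: hsym)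

lemma ddhsym: "pd x (pd z (\<lambda>y. h y a b)) 0 = pd x (pd z (\<lambda>y. h y b a)) 0"
proof (rule pd_cong[OF openU zU])
  fix y assume "y \<in> U"
  then show "pd z (\<lambda>y. h y a b) y = pd z (\<lambda>y. h y b a) y"
    by (rule pd_cong[OF openU]) (simp add: hsym)
qed

lemma F_upd: "length I = p \<Longrightarrow> s < p \<Longrightarrow> F 0 (I[s:=l]) = (-1)^s * F 0 (l # del_at s I)"
  by (rule pform_upd[OF pf zU])

lemma dF_upd:
  assumes "length I = p" "s < p"
  shows "pd j (\<lambda>y. F y (I[s:=l])) 0 = (-1)^s * pd j (\<lambda>y. F y (l # del_at s I)) 0"
proof -
  have "pd j (\<lambda>y. F y (I[s:=l])) 0 = pd j (\<lambda>y. (-1)^s * F y (l # del_at s I)) 0"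
    by (rule pd_cong[OF openU zU]) (rule pform_upd[OF pf _ assms])
  also have "\<dots> = (-1)^s * pd j (\<lambda>y. F y (l # del_at s I)) 0"
    by (rule pd_cmult) (rule smooth_d0[OF Fsm zU], use assms in simp)
  finally show ?thesis .
qed

lemma B1: "(\<Sum>s<Suc p. \<Sum>l\<in>UNIV. (1/2) * csh l j ((j#I)!s) * pd (hd ((j#I)[s:=l])) (\<lambda>y. F y (tl ((j#I)[s:=l]))) 0)
   = (\<Sum>l\<in>UNIV. (1/2) * csh l j j * pd l (\<lambda>y. F y I) 0)
   + (\<Sum>s<p. \<Sum>l\<in>UNIV. (1/2) * csh l j (I!s) * pd j (\<lambda>y. F y (I[s:=l])) 0)"
  unfolding sum.lessThan_Suc_shift by simp

lemma B2: "(\<Sum>j\<in>UNIV. \<Sum>l\<in>UNIV. (1/2) * csh l j j * pd l (\<lambda>y. F y I) 0)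
   = (\<Sum>j\<in>UNIV. \<Sum>k\<in>UNIV. (pd j (\<lambda>y. h y j k) 0 - (1/2) * pd k (\<lambda>y. h y j j) 0) * pd k (\<lambda>y. F y I) 0)"
proof (intro sum.cong refl)
  fix j k
  have "pd j (\<lambda>y. h y k j) 0 = pd j (\<lambda>y. h y j k) 0" by (rule dhsym)
  then show "(1/2) * csh k j j * pd k (\<lambda>y. F y I) 0 = (pd j (\<lambda>y. h y j k) 0 - (1/2) * pd k (\<lambda>y. h y j j) 0) * pd k (\<lambda>y. F y I) 0"
    unfolding csh_def by (simp add: algebra_simps)
qed

lemma B3:
  assumes I: "length I = p"
  shows "(\<Sum>j\<in>UNIV. \<Sum>s<p. \<Sum>l\<in>UNIV. csh l j (I!s) * pd j (\<lambda>y. F y (I[s:=l])) 0)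
   = (\<Sum>j\<in>UNIV. \<Sum>k\<in>UNIV. \<Sum>s<length I. (-1)^s *
        (pd (I!s) (\<lambda>y. h y j k) 0 + pd j (\<lambda>y. h y (I!s) k) 0 - pd k (\<lambda>y. h y (I!s) j) 0)
        * pd j (\<lambda>y. F y (k # del_at s I)) 0)"
proof -
  have "(\<Sum>s<p. \<Sum>l\<in>UNIV. csh l j (I!s) * pd j (\<lambda>y. F y (I[s:=l])) 0)
     = (\<Sum>s<p. \<Sum>l\<in>UNIV. (-1)^s *
        (pd (I!s) (\<lambda>y. h y j l) 0 + pd j (\<lambda>y. h y (I!s) l) 0 - pd l (\<lambda>y. h y (I!s) j) 0)
        * pd j (\<lambda>y. F y (l # del_at s I)) 0)" for j
  proof (intro sum.cong refl)
    fix s l assume s: "s \<in> {..<p}"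
    have e1: "pd j (\<lambda>y. h y l (I!s)) 0 = pd j (\<lambda>y. h y (I!s) l) 0" by (rule dhsym)
    have e2: "pd l (\<lambda>y. h y j (I!s)) 0 = pd l (\<lambda>y. h y (I!s) j) 0" by (rule dhsym)
    show "csh l j (I!s) * pd j (\<lambda>y. F y (I[s:=l])) 0 = (-1)^s *
        (pd (I!s) (\<lambda>y. h y j l) 0 + pd j (\<lambda>y. h y (I!s) l) 0 - pd l (\<lambda>y. h y (I!s) j) 0)
        * pd j (\<lambda>y. F y (l # del_at s I)) 0"
    proof -
      have "pd j (\<lambda>y. F y (I[s:=l])) 0 = (-1)^s * pd j (\<lambda>y. F y (l # del_at s I)) 0"
        using dF_upd[OF I] s by simp
      then show ?thesis unfolding csh_def using e1 e2 by (simp add: algebra_simps)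
    qed
  qed
  then show ?thesis using I by (simp add: sum.swap[of _ "{..<p}"])
qed

lemma B4:
  assumes I: "length I = p"
  shows "(\<Sum>j\<in>UNIV. \<Sum>s<p. \<Sum>l\<in>UNIV. (1/2) * ddcs h j l j (I!s) * F 0 (I[s:=l]))
   = (1/2) * (\<Sum>j\<in>UNIV. \<Sum>k\<in>UNIV. \<Sum>s<length I. (-1)^s *
        (pd j (pd (I!s) (\<lambda>y. h y j k)) 0 - pd j (pd k (\<lambda>y. h y (I!s) j)) 0
         + pd j (pd j (\<lambda>y. h y (I!s) k)) 0) * F 0 (k # del_at s I))"
proof -
  have "(\<Sum>s<p. \<Sum>l\<in>UNIV. (1/2) * ddcs h j l j (I!s) * F 0 (I[s:=l]))
     = (\<Sum>s<p. \<Sum>l\<in>UNIV. (1/2) * ((-1)^s *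
        (pd j (pd (I!s) (\<lambda>y. h y j l)) 0 - pd j (pd l (\<lambda>y. h y (I!s) j)) 0
         + pd j (pd j (\<lambda>y. h y (I!s) l)) 0) * F 0 (l # del_at s I)))" for j
  proof (intro sum.cong refl)
    fix s l assume s: "s \<in> {..<p}"
    have e1: "pd j (pd j (\<lambda>y. h y l (I!s))) 0 = pd j (pd j (\<lambda>y. h y (I!s) l)) 0" by (rule ddhsym)
    have e2: "pd j (pd l (\<lambda>y. h y j (I!s))) 0 = pd j (pd l (\<lambda>y. h y (I!s) j)) 0" by (rule ddhsym)
    show "(1/2) * ddcs h j l j (I!s) * F 0 (I[s:=l]) = (1/2) * ((-1)^s *
        (pd j (pd (I!s) (\<lambda>y. h y j l)) 0 - pd j (pd l (\<lambda>y. h y (I!s) j)) 0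
         + pd j (pd j (\<lambda>y. h y (I!s) l)) 0) * F 0 (l # del_at s I))"
    proof -
      have "F 0 (I[s:=l]) = (-1)^s * F 0 (l # del_at s I)"
        using F_upd[OF I] s by simp
      then show ?thesis unfolding ddcs_def using e1 e2 by (simp add: algebra_simps)
    qed
  qed
  then show ?thesis using I by (simp add: sum.swap[of _ "{..<p}"] sum_distrib_left)
qed

end


definition dd3 :: "'n::finite metric \<Rightarrow> 'n \<Rightarrow> 'n \<Rightarrow> 'n \<Rightarrow> 'n \<Rightarrow> real" where
  "dd3 f j r k m = pd j (pd k (\<lambda>y. f y r m)) 0 + pd j (pd m (\<lambda>y. f y k r)) 0 - pd j (pd r (\<lambda>y. f y k m)) 0"

definition JB :: "'n::finite metric \<Rightarrow> 'n metric \<Rightarrow> 'n form \<Rightarrow> 'n list \<Rightarrow> real" where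
  "JB g h F I = - (\<Sum>j\<in>UNIV. \<Sum>k\<in>UNIV. \<Sum>s<length I. \<Sum>l\<in>UNIV. ((1/2) * dd3 g j l k (I!s)) * (h 0 j k * F 0 (I[s:=l])))
     - (\<Sum>j\<in>UNIV. \<Sum>s<length I. \<Sum>l\<in>UNIV. \<Sum>r\<in>UNIV. ((1/2) * dd3 g j r j (I!s)) * (h 0 l r * F 0 (I[s:=l])))"

lemma lo_JB: "lo U (length I) (\<lambda>h F. JB g h F I)"
  unfolding JB_def
  by (intro lo_diff lo_neg lo_sumU lo_sumL lo_scale lo_atom0) simp_all

context NCH
begin

lemma ddcs_dd3: "ddcs f = dd3 f"
  unfolding ddcs_def dd3_def by (intro ext) simp

lemma v2: assumes I: "length I = p"
  shows "- D6v j j I = (\<Sum>s<p. \<Sum>l\<in>UNIV. (1/2) * ddcs h j l j (I!s) * F 0 (I[s:=l]))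
     - (\<Sum>s<p. \<Sum>l\<in>UNIV. \<Sum>r\<in>UNIV. ((1/2) * dd3 g j r j (I!s)) * (h 0 l r * F 0 (I[s:=l])))
     + (\<Sum>s<p. \<Sum>l\<in>UNIV. csh l j (I!s) * pd j (\<lambda>y. F y (I[s:=l])) 0)
     + (\<Sum>l\<in>UNIV. (1/2) * csh l j j * pd l (\<lambda>y. F y I) 0)"
proof -
  have "- D6v j j I = (\<Sum>s<p. \<Sum>l\<in>UNIV. W j l j (I!s) * F 0 (I[s:=l]) + (1/2) * csh l j (I!s) * pd j (\<lambda>y. F y (I[s:=l])) 0)
     + ((\<Sum>l\<in>UNIV. (1/2) * csh l j j * pd l (\<lambda>y. F y I) 0)
   + (\<Sum>s<p. \<Sum>l\<in>UNIV. (1/2) * csh l j (I!s) * pd j (\<lambda>y. F y (I[s:=l])) 0))"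
    unfolding D6v_def I B1[symmetric] by simp
  also have "\<dots> = (\<Sum>s<p. \<Sum>l\<in>UNIV. (1/2) * ddcs h j l j (I!s) * F 0 (I[s:=l])
     - (\<Sum>r\<in>UNIV. ((1/2) * dd3 g j r j (I!s)) * (h 0 l r * F 0 (I[s:=l])))
     + csh l j (I!s) * pd j (\<lambda>y. F y (I[s:=l])) 0)
     + (\<Sum>l\<in>UNIV. (1/2) * csh l j j * pd l (\<lambda>y. F y I) 0)"
    unfolding W_def ddcs_dd3
    by (simp add: sum.distrib[symmetric] algebra_simps sum_distrib_left sum_distrib_right sum_divide_distrib)
  also have "\<dots> = (\<Sum>s<p. \<Sum>l\<in>UNIV. (1/2) * ddcs h j l j (I!s) * F 0 (I[s:=l]))
     - (\<Sum>s<p. \<Sum>l\<in>UNIV. \<Sum>r\<in>UNIV. ((1/2) * dd3 g j r j (I!s)) * (h 0 l r * F 0 (I[s:=l])))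
     + (\<Sum>s<p. \<Sum>l\<in>UNIV. csh l j (I!s) * pd j (\<lambda>y. F y (I[s:=l])) 0)
     + (\<Sum>l\<in>UNIV. (1/2) * csh l j j * pd l (\<lambda>y. F y I) 0)"
    by (simp add: sum.distrib sum_subtractf)
  finally show ?thesis .
qed


lemma bochner_eq: assumes I: "length I = p"
  shows "var bochner g h F 0 I - bochner_terms h F I = JB g h F I"
proof -
  have v1: "(\<Sum>j\<in>UNIV. \<Sum>k\<in>UNIV. h 0 j k * cov2 g F 0 j k I)
     = (\<Sum>j\<in>UNIV. \<Sum>k\<in>UNIV. h 0 j k * pd j (pd k (\<lambda>y. F y I)) 0)
     - (\<Sum>j\<in>UNIV. \<Sum>k\<in>UNIV. \<Sum>s<length I. \<Sum>l\<in>UNIV. ((1/2) * dd3 g j l k (I!s)) * (h 0 j k * F 0 (I[s:=l])))"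
    unfolding cov2_g0[OF I] ddcs_dd3
    by (simp add: right_diff_distrib sum_subtractf sum_distrib_left algebra_simps)
  have vv: "- (\<Sum>j\<in>UNIV. D6v j j I) = (\<Sum>j\<in>UNIV. \<Sum>s<p. \<Sum>l\<in>UNIV. (1/2) * ddcs h j l j (I!s) * F 0 (I[s:=l]))
     - (\<Sum>j\<in>UNIV. \<Sum>s<p. \<Sum>l\<in>UNIV. \<Sum>r\<in>UNIV. ((1/2) * dd3 g j r j (I!s)) * (h 0 l r * F 0 (I[s:=l])))
     + (\<Sum>j\<in>UNIV. \<Sum>s<p. \<Sum>l\<in>UNIV. csh l j (I!s) * pd j (\<lambda>y. F y (I[s:=l])) 0)
     + (\<Sum>j\<in>UNIV. \<Sum>l\<in>UNIV. (1/2) * csh l j j * pd l (\<lambda>y. F y I) 0)"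
    unfolding sum_negf[symmetric] v2[OF I] by (simp add: sum.distrib sum_subtractf)
  show ?thesis
    unfolding var_bochner[OF I] bochner_terms_def common_terms_def JB_def
    using v1 vv B2 B3[OF I] B4[OF I] I by simp
qed

end

lemma bochner_half:
  assumes "normal_coords g U"
  shows "sim_at U (length I) (\<lambda>h F. var bochner g h F 0 I) (\<lambda>h F. bochner_terms h F I)"
  unfolding sim_at_lo
proof (rule lo_cong[OF lo_JB])
  fix h F assume "sym_tensor h U" "pform (length I) F U"
  then have "NCH g U h F (length I)" using assms by (intro NCH.intro NC.intro NCH_axioms.intro)
  then show "var bochner g h F 0 I - bochner_terms h F I = JB g h F I" by (rule NCH.bochner_eq) simp
qed


context NCH
begin

lemma D4g: "DERIV (\<lambda>a. cov (G a) E 0 k J) 0 :> - (\<Sum>s<length J. \<Sum>l\<in>UNIV. (1/2) * csh l k (J!s) * E 0 (J[s:=l]))"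
  unfolding cov_def
  apply (rule DERIV_eq)
   apply (rule D2 DR)+
  apply (simp add: algebra_simps)
  done

lemma cov_g0g: "cov g E 0 k J = pd k (\<lambda>y. E y J) 0"
  unfolding cov_def by (simp add: christ0)

lemma T1_deriv: "DERIV (\<lambda>a. codiff (G a) E 0 I) 0 :>
   (\<Sum>j\<in>UNIV. \<Sum>k\<in>UNIV. h 0 j k * pd k (\<lambda>y. E y (j#I)) 0)
   + (\<Sum>j\<in>UNIV. \<Sum>s<Suc (length I). \<Sum>l\<in>UNIV. (1/2) * csh l j ((j#I)!s) * E 0 ((j#I)[s:=l]))"
  unfolding codiff_def
  apply (rule DERIV_eq)
   apply (rule D1 D4g DR)+
  apply (simp add: ginv0 cov_g0g dsimps sum_negf sum.distrib sum_subtractf algebra_simps)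
  done

lemma T1_val: "var codiff g h E 0 I =
   (\<Sum>j\<in>UNIV. \<Sum>k\<in>UNIV. h 0 j k * pd k (\<lambda>y. E y (j#I)) 0)
   + (\<Sum>j\<in>UNIV. \<Sum>s<Suc (length I). \<Sum>l\<in>UNIV. (1/2) * csh l j ((j#I)!s) * E 0 ((j#I)[s:=l]))"
  unfolding var_def by (rule DERIV_imp_deriv, rule T1_deriv)

definition Nq :: "real^'n \<Rightarrow> 'n \<Rightarrow> 'n \<Rightarrow> real" where
  "Nq y l m = (\<Sum>v\<in>UNIV. (\<Sum>u\<in>UNIV. ginv g y l u * h y u v) * ginv g y v m)"

definition csy :: "'n metric \<Rightarrow> real^'n \<Rightarrow> 'n \<Rightarrow> 'n \<Rightarrow> 'n \<Rightarrow> real" where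
  "csy f y r k m = pd k (\<lambda>y. f y r m) y + pd m (\<lambda>y. f y k r) y - pd r (\<lambda>y. f y k m) y"

definition Gp :: "real^'n \<Rightarrow> 'n \<Rightarrow> 'n \<Rightarrow> 'n \<Rightarrow> real" where
  "Gp y l k m = (1/2) * (\<Sum>r\<in>UNIV. - Nq y l r * csy g y r k m + ginv g y l r * csy h y r k m)"

lemma DY1: assumes y: "y \<in> U" shows "DERIV (\<lambda>a. ginv (G a) y l m) 0 :> - Nq y l m"
proof -
  let ?A = "\<lambda>a. (\<chi> r c. G a y r c)"
  have A0: "?A 0 = (\<chi> r c. g y r c)" by simp
  have inv: "invertible (?A 0)" unfolding A0 by (rule ginv_inv[OF y])
  have "DERIV (\<lambda>a. matrix_inv (?A a) $ l $ m) 0 :> (- (matrix_inv (?A 0) ** (\<chi> r c. h y r c) ** matrix_inv (?A 0))) $ l $ m"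
  proof (rule DERIV_minv[of ?A _ 0, OF _ inv])
    fix i j
    show "DERIV (\<lambda>a. ?A a $ i $ j) 0 :> (\<chi> r c. h y r c) $ i $ j"
      unfolding gplus_def by (auto intro!: DERIV_eq[OF DERIV_add[OF DERIV_const DERIV_cmult_right[OF DERIV_ident]]])
  qed
  then show ?thesis unfolding ginv_def A0 Nq_def by (simp add: matrix_matrix_mult_def)
qed

lemma csyG: "y \<in> U \<Longrightarrow> csy (G a) y r k m = csy g y r k m + a * csy h y r k m"
  unfolding csy_def using linG by (simp add: algebra_simps)

lemma DY2: assumes y: "y \<in> U" shows "DERIV (\<lambda>a. christ (G a) y l k m) 0 :> Gp y l k m"
proof -
  have e: "christ (G a) y l k m = (1/2) * (\<Sum>r\<in>UNIV. ginv (G a) y l r * (csy g y r k m + a * csy h y r k m))" for a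
    unfolding christ_def csy_def by (simp add: linG[OF y] algebra_simps)
  show ?thesis
    unfolding e Gp_def
    apply (rule DERIV_eq)
     apply (rule DY1[OF y] DR)+
    apply (simp add: algebra_simps)
    done
qed

lemma DY3: assumes y: "y \<in> U"
  shows "DERIV (\<lambda>a. cov (G a) F y k J) 0 :> - (\<Sum>s<length J. \<Sum>l\<in>UNIV. Gp y l k (J!s) * F y (J[s:=l]))"
  unfolding cov_def
  apply (rule DERIV_eq)
   apply (rule DY2[OF y] DR)+
  apply (simp add: algebra_simps)
  done

definition VC :: "real^'n \<Rightarrow> 'n list \<Rightarrow> real" where
  "VC y K = - (\<Sum>j\<in>UNIV. \<Sum>k\<in>UNIV. (- Nq y j k) * cov g F y k (j#K)
     + (- (\<Sum>s<length (j#K). \<Sum>l\<in>UNIV. Gp y l k ((j#K)!s) * F y ((j#K)[s:=l]))) * ginv g y j k)"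

lemma DY4: assumes y: "y \<in> U"
  shows "DERIV (\<lambda>a. codiff (G a) F y K) 0 :> VC y K"
  unfolding codiff_def VC_def
  apply (rule DERIV_eq)
   apply (rule DY1[OF y] DY3[OF y] DR)+
  apply (simp only: gplus0)
  done

lemma VC_val: "y \<in> U \<Longrightarrow> var codiff g h F y K = VC y K"
  unfolding var_def by (rule DERIV_imp_deriv, rule DY4)


lemma hasd_ginvg: "hasd i (\<lambda>y. ginv g y l m) 0"
proof -
  have "hasd i (\<lambda>y. ginv g y l m) ((- (matrix_inv (\<chi> r c. g 0 r c) ** (0::real^'n^'n) ** matrix_inv (\<chi> r c. g 0 r c))) $ l $ m)"
  proof (rule hasd_ginv[of _ g])
    fix r c show "hasd i (\<lambda>y. g y r c) ((0::real^'n^'n) $ r $ c)"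
      using hasd_diffb[OF smooth_d0[OF gsm zU], of i r c] dg0 by simp
  qed (use inv0 in simp)
  then show ?thesis by simp
qed

lemma hasd_h: "hasd i (\<lambda>y. h y a b) (pd i (\<lambda>y. h y a b) 0)"
  by (rule hasd_diffb[OF smooth_d0[OF hsm zU]])

lemma hasd_Nq: "hasd i (\<lambda>y. Nq y l m) (pd i (\<lambda>y. h y l m) 0)"
  unfolding Nq_def
  apply (rule hasd_eq)
   apply (rule hasd_ginvg hasd_h HR)+
  apply (simp add: ginv0 dsimps)
  done

lemma hasd_csy: "hasd i (\<lambda>y. csy f y r k m) (ddcs f i r k m)" if "\<And>a b. smooth_fun (\<lambda>x. f x a b) U"
  unfolding csy_def ddcs_def
  by (intro hasd_add hasd_diff hasd_diffb smooth_d1[OF that zU])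

lemma csy_g0: "csy g 0 r k m = 0" unfolding csy_def by (simp add: dg0)
lemma csy_h0: "csy h 0 r k m = csh r k m" unfolding csy_def csh_def by simp
lemma Nq0: "Nq 0 l m = h 0 l m" unfolding Nq_def by (simp add: ginv0 dsimps)

lemma hasd_Gp: "hasd i (\<lambda>y. Gp y l k m) (W i l k m)"
  unfolding Gp_def W_def
  apply (rule hasd_eq)
   apply (rule hasd_ginvg hasd_Nq hasd_csy gsm hsm HR hasd_cmult)+
  apply (simp add: ginv0 dsimps csy_g0 Nq0 algebra_simps sum_subtractf)
  done

lemma Gp0: "Gp 0 l k m = (1/2) * csh l k m"
  unfolding Gp_def by (simp add: ginv0 dsimps csy_g0 csy_h0)

lemma hasd_covg: "length J = p \<Longrightarrow> hasd i (\<lambda>y. cov g F y k J) (CV 0 i k J)"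
  using hasd_cov[OF inv0, of J i k] by simp

lemma CV0: "length J = p \<Longrightarrow> CV 0 i k J = pd i (pd k (\<lambda>y. F y J)) 0
     - (\<Sum>s<length J. \<Sum>l\<in>UNIV. (1/2) * ddcs g i l k (J!s) * F 0 (J[s:=l]))"
  unfolding CV_def E3_def by (simp add: christ0 ginv0 dsimps)

definition VCd :: "'n \<Rightarrow> 'n list \<Rightarrow> real" where
  "VCd i K = (\<Sum>j\<in>UNIV. \<Sum>k\<in>UNIV. pd i (\<lambda>y. h y j k) 0 * pd k (\<lambda>y. F y (j#K)) 0 + h 0 j k * CV 0 i k (j#K))
    + (\<Sum>j\<in>UNIV. \<Sum>s<length (j#K). \<Sum>l\<in>UNIV. W i l j ((j#K)!s) * F 0 ((j#K)[s:=l])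
        + (1/2) * csh l j ((j#K)!s) * pd i (\<lambda>y. F y ((j#K)[s:=l])) 0)"

lemma hasd_VC: assumes K: "Suc (length K) = p" shows "hasd i (\<lambda>y. VC y K) (VCd i K)"
  unfolding VC_def VCd_def
  apply (rule hasd_eq)
   apply (rule hasd_Nq hasd_covg hasd_ginvg hasd_Gp hasdF HR | simp only: length_list_update list.size K add_0_right add_Suc_right)+
  apply (simp add: Nq0 Gp0 cov_g0 sum_negf ginv0 md1 md2)
  apply (simp add: sum.distrib sum_subtractf ifm0 sum_if0 sum.delta sum.delta')
  apply (simp add: algebra_simps sum_negf)
  done

end


lemma del_at_Cons0[simp]: "del_at 0 (x#L) = L" unfolding del_at_def by simp
lemma del_at_ConsS[simp]: "del_at (Suc s) (x#L) = x # del_at s L" unfolding del_at_def by simp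

lemma nths_upt: "nths [0..<n] A = filter (\<lambda>i. i \<in> A) [0..<n]"
  by (induction n) (simp_all add: nths_append)

lemma map_filter_nths: "map (nth I) (filter P [0..<length I]) = nths I {i. P i}"
proof -
  have "map (nth I) (filter P [0..<length I]) = map (nth I) (nths [0..<length I] {i. P i})"
    by (simp add: nths_upt)
  also have "\<dots> = nths (map (nth I) [0..<length I]) {i. P i}" by (simp add: nths_map)
  also have "map (nth I) [0..<length I] = I" by (rule map_nth)
  finally show ?thesis .
qed

lemma del_two_nths: "del_two s t I = nths I {i. i \<noteq> s \<and> i \<noteq> t}"
  unfolding del_two_def by (rule map_filter_nths)

lemma del_at_nths: assumes "s < length I" shows "del_at s I = nths I {i. i \<noteq> s}"
proof -
  have I: "I = take s I @ (I!s # drop (Suc s) I)" using assms by (simp add: id_take_nth_drop)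
  have "nths I {i. i \<noteq> s} = nths (take s I) {i. i \<noteq> s} @ nths (I!s # drop (Suc s) I) {j. j + length (take s I) \<in> {i. i \<noteq> s}}"
    by (subst I) (rule nths_append)
  also have "nths (take s I) {i. i \<noteq> s} = take s I" by (rule nths_all) simp
  also have "length (take s I) = s" using assms by simp
  also have "nths (I!s # drop (Suc s) I) {j. j + s \<in> {i. i \<noteq> s}} = drop (Suc s) I"
    by (simp add: nths_Cons nths_all)
  finally show ?thesis unfolding del_at_def by simp
qed

definition ix :: "nat \<Rightarrow> nat \<Rightarrow> nat" where "ix s t = (if t < s then t else t - 1)"

lemma del_del_two:
  assumes "s < length I" "t < length I" "t \<noteq> s"
  shows "del_at (ix s t) (del_at s I) = del_two s t I"
proof -
  have u: "ix s t < length (del_at s I)" using assms by (auto simp: ix_def)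
  have c: "card {i'. i' \<noteq> s \<and> i' < i} = (if s < i then i - 1 else i)" for i
  proof -
    have "{i'. i' \<noteq> s \<and> i' < i} = {..<i} - {s}" by auto
    then show ?thesis by (simp add: card_Diff_singleton)
  qed
  have "del_at (ix s t) (del_at s I) = nths (nths I {i. i \<noteq> s}) {i. i \<noteq> ix s t}"
    using u assms by (simp add: del_at_nths)
  also have "\<dots> = nths I {i. i \<noteq> s \<and> i \<noteq> t}"
    unfolding nths_nths
  proof (rule arg_cong[where f = "nths I"])
    show "{i \<in> {i. i \<noteq> s}. \<exists>j\<in>{i. i \<noteq> ix s t}. card {i' \<in> {i. i \<noteq> s}. i' < i} = j} = {i. i \<noteq> s \<and> i \<noteq> t}"
      using assms by (auto simp: c ix_def split: if_splits)
  qed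
  finally show ?thesis by (simp add: del_two_nths)
qed

lemma nth_del_ix:
  assumes "s < length I" "t < length I" "t \<noteq> s"
  shows "del_at s I ! (ix s t) = I ! t"
  using assms by (auto simp: nth_del_at ix_def)

lemma upd_del_ix:
  assumes "s < length I" "t < length I" "t \<noteq> s"
  shows "(del_at s I)[ix s t := l] = del_at s (I[t := l])"
proof (rule nth_equalityI)
  show "length ((del_at s I)[ix s t := l]) = length (del_at s (I[t := l]))" using assms by simp
  fix k assume "k < length ((del_at s I)[ix s t := l])"
  then have k: "k < length I - 1" using assms by simp
  show "(del_at s I)[ix s t := l] ! k = del_at s (I[t := l]) ! k"
    using assms k by (auto simp: nth_del_at nth_list_update ix_def)
qed

lemma sign_ix:
  assumes "t \<noteq> s"
  shows "(-1::real)^(ix s t) = (-1)^(t + (if t > s then 1 else 0))"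
proof (cases "t < s")
  case True then show ?thesis by (simp add: ix_def)
next
  case False
  then obtain t' where "t = Suc t'" using assms by (cases t) auto
  then show ?thesis using False assms by (simp add: ix_def)
qed

lemma reidx:
  assumes "s < n"
  shows "(\<Sum>u<n - 1. f u) = (\<Sum>t\<in>{..<n} - {s}. f (ix s t))"
proof (rule sum.reindex_bij_witness[where j = "\<lambda>u. if u < s then u else Suc u" and i = "ix s"])
  fix t assume "t \<in> {..<n} - {s}"
  then show "(if ix s t < s then ix s t else Suc (ix s t)) = t" by (auto simp: ix_def)
next
  fix t assume "t \<in> {..<n} - {s}"
  then show "ix s t \<in> {..<n - 1}" using assms by (auto simp: ix_def)
next
  fix u assume "u \<in> {..<n - 1}"
  then show "ix s (if u < s then u else Suc u) = u" by (auto simp: ix_def)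
next
  fix u assume "u \<in> {..<n - 1}"
  then show "(if u < s then u else Suc u) \<in> {..<n} - {s}" by auto
qed (auto simp: ix_def)

lemma sum_offdiag: "s < (n::nat) \<Longrightarrow> (\<Sum>t\<in>{..<n} - {s}. f t) = (\<Sum>t<n. if t = s then 0 else f t)"
proof -
  assume s: "s < n"
  have "(\<Sum>t<n. if t = s then 0 else f t) = (\<Sum>t\<in>{..<n} - {s}. if t = s then 0 else f t)"
    using s by (subst sum.remove[of _ s]) auto
  also have "\<dots> = (\<Sum>t\<in>{..<n} - {s}. f t)" by (rule sum.cong) auto
  finally show ?thesis by simp
qed

lemma length_del_two: "s < length I \<Longrightarrow> t < length I \<Longrightarrow> s \<noteq> t \<Longrightarrow> length (del_two s t I) = length I - 2"
proof -
  assume a: "s < length I" "t < length I" "s \<noteq> t"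
  have "length (del_two s t I) = length (del_at (ix s t) (del_at s I))"
    using del_del_two[of s I t] a by simp
  also have "\<dots> = length I - 2" using a by (auto simp: ix_def)
  finally show ?thesis .
qed


context NCH
begin

lemma T2val: assumes I: "length I = p"
  shows "extd (var codiff g h F) 0 I = (\<Sum>s<p. (-1)^s * VCd (I!s) (del_at s I))"
  unfolding extd_def I
proof (rule sum.cong[OF refl])
  fix s assume s: "s \<in> {..<p}"
  have "pd (I!s) (\<lambda>y. var codiff g h F y (del_at s I)) 0 = pd (I!s) (\<lambda>y. VC y (del_at s I)) 0"
    by (rule pd_cong[OF openU zU]) (rule VC_val)
  also have "\<dots> = VCd (I!s) (del_at s I)"
    by (rule hasd_pd, rule hasd_VC) (use s I in auto)
  finally show "(-1)^s * pd (I!s) (\<lambda>y. var codiff g h F y (del_at s I)) 0 = (-1)^s * VCd (I!s) (del_at s I)"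
    by simp
qed

lemma extd_cons: "extd F x (a#J) = pd a (\<lambda>y. F y J) x + (\<Sum>t<length J. (-1)^(Suc t) * pd (J!t) (\<lambda>y. F y (a # del_at t J)) x)"
  unfolding extd_def length_Cons sum.lessThan_Suc_shift by simp

lemma E1: assumes I: "length I = p"
  shows "pd k (\<lambda>y. extd F y (j#I)) 0 = pd k (pd j (\<lambda>y. F y I)) 0
     + (\<Sum>s<p. (-1)^(Suc s) * pd k (pd (I!s) (\<lambda>y. F y (j # del_at s I))) 0)"
proof -
  have "hasd k (\<lambda>y. extd F y (j#I)) (\<Sum>s<Suc p. (-1)^s * pd k (pd ((j#I)!s) (\<lambda>y. F y (del_at s (j#I)))) 0)"
    unfolding extd_def length_Cons I
    by (intro hasd_sum hasd_cmult hasdF1) (use I in \<open>auto simp: less_Suc_eq_0_disj\<close>)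
  then have "pd k (\<lambda>y. extd F y (j#I)) 0 = (\<Sum>s<Suc p. (-1)^s * pd k (pd ((j#I)!s) (\<lambda>y. F y (del_at s (j#I)))) 0)"
    by (rule hasd_pd)
  then show ?thesis unfolding sum.lessThan_Suc_shift by simp
qed

lemma VCd_split: assumes K: "Suc (length K) = p"
  shows "VCd i K =
      (\<Sum>j\<in>UNIV. \<Sum>k\<in>UNIV. pd i (\<lambda>y. h y j k) 0 * pd k (\<lambda>y. F y (j#K)) 0)
    + (\<Sum>j\<in>UNIV. \<Sum>k\<in>UNIV. h 0 j k * pd i (pd k (\<lambda>y. F y (j#K))) 0)
    - (\<Sum>j\<in>UNIV. \<Sum>k\<in>UNIV. \<Sum>s<p. \<Sum>l\<in>UNIV. ((1/2) * dd3 g i l k ((j#K)!s)) * (h 0 j k * F 0 ((j#K)[s:=l])))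
    + ((\<Sum>j\<in>UNIV. \<Sum>l\<in>UNIV. (1/2) * ddcs h i l j j * F 0 (l#K))
      + (\<Sum>j\<in>UNIV. \<Sum>u<length K. \<Sum>l\<in>UNIV. (1/2) * ddcs h i l j (K!u) * F 0 (j # K[u:=l])))
    - (\<Sum>j\<in>UNIV. \<Sum>s<p. \<Sum>l\<in>UNIV. \<Sum>r\<in>UNIV. ((1/2) * dd3 g i r j ((j#K)!s)) * (h 0 l r * F 0 ((j#K)[s:=l])))
    + ((\<Sum>j\<in>UNIV. \<Sum>l\<in>UNIV. (1/2) * csh l j j * pd i (\<lambda>y. F y (l#K)) 0)
      + (\<Sum>j\<in>UNIV. \<Sum>u<length K. \<Sum>l\<in>UNIV. (1/2) * csh l j (K!u) * pd i (\<lambda>y. F y (j # K[u:=l])) 0))"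
proof -
  have jK: "length (j#K) = p" for j using K by simp
  have a: "(\<Sum>s<p. \<Sum>l\<in>UNIV. W i l j ((j#K)!s) * F 0 ((j#K)[s:=l]) + (1/2) * csh l j ((j#K)!s) * pd i (\<lambda>y. F y ((j#K)[s:=l])) 0)
     = (\<Sum>s<p. \<Sum>l\<in>UNIV. (1/2) * ddcs h i l j ((j#K)!s) * F 0 ((j#K)[s:=l]))
     - (\<Sum>s<p. \<Sum>l\<in>UNIV. \<Sum>r\<in>UNIV. ((1/2) * dd3 g i r j ((j#K)!s)) * (h 0 l r * F 0 ((j#K)[s:=l])))
     + (\<Sum>s<p. \<Sum>l\<in>UNIV. (1/2) * csh l j ((j#K)!s) * pd i (\<lambda>y. F y ((j#K)[s:=l])) 0)" for j
  proof -
    have "W i l j m * X = (1/2) * ddcs h i l j m * X - (\<Sum>r\<in>UNIV. ((1/2) * dd3 g i r j m) * (h 0 l r * X))" for l m X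
      unfolding W_def ddcs_dd3 by (simp add: sum_distrib_left sum_distrib_right sum_divide_distrib algebra_simps)
    then show ?thesis by (simp add: sum.distrib sum_subtractf)
  qed
  have b: "(\<Sum>s<p. f s) = f 0 + (\<Sum>u<length K. f (Suc u))" for f :: "nat \<Rightarrow> real"
    unfolding K[symmetric] by (rule sum.lessThan_Suc_shift)
  have c: "(\<Sum>k\<in>UNIV. h 0 j k * CV 0 i k (j#K)) = (\<Sum>k\<in>UNIV. h 0 j k * pd i (pd k (\<lambda>y. F y (j#K))) 0)
      - (\<Sum>k\<in>UNIV. \<Sum>s<p. \<Sum>l\<in>UNIV. ((1/2) * dd3 g i l k ((j#K)!s)) * (h 0 j k * F 0 ((j#K)[s:=l])))" for j
    unfolding CV0[OF jK] jK ddcs_dd3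
    by (simp add: right_diff_distrib sum_subtractf sum_distrib_left algebra_simps)
  have s1: "(\<Sum>j\<in>UNIV. \<Sum>k\<in>UNIV. pd i (\<lambda>y. h y j k) 0 * pd k (\<lambda>y. F y (j#K)) 0 + h 0 j k * CV 0 i k (j#K))
     = (\<Sum>j\<in>UNIV. \<Sum>k\<in>UNIV. pd i (\<lambda>y. h y j k) 0 * pd k (\<lambda>y. F y (j#K)) 0)
     + (\<Sum>j\<in>UNIV. \<Sum>k\<in>UNIV. h 0 j k * pd i (pd k (\<lambda>y. F y (j#K))) 0)
     - (\<Sum>j\<in>UNIV. \<Sum>k\<in>UNIV. \<Sum>s<p. \<Sum>l\<in>UNIV. ((1/2) * dd3 g i l k ((j#K)!s)) * (h 0 j k * F 0 ((j#K)[s:=l])))"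
    by (simp only: sum.distrib c sum_subtractf)
  have x0: "(\<Sum>j\<in>UNIV. \<Sum>s<p. \<Sum>l\<in>UNIV. (1/2) * ddcs h i l j ((j#K)!s) * F 0 ((j#K)[s:=l]))
     = (\<Sum>j\<in>UNIV. \<Sum>l\<in>UNIV. (1/2) * ddcs h i l j j * F 0 (l#K))
      + (\<Sum>j\<in>UNIV. \<Sum>u<length K. \<Sum>l\<in>UNIV. (1/2) * ddcs h i l j (K!u) * F 0 (j # K[u:=l]))"
    unfolding b by (simp add: sum.distrib)
  have z0: "(\<Sum>j\<in>UNIV. \<Sum>s<p. \<Sum>l\<in>UNIV. (1/2) * csh l j ((j#K)!s) * pd i (\<lambda>y. F y ((j#K)[s:=l])) 0)
     = (\<Sum>j\<in>UNIV. \<Sum>l\<in>UNIV. (1/2) * csh l j j * pd i (\<lambda>y. F y (l#K)) 0)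
      + (\<Sum>j\<in>UNIV. \<Sum>u<length K. \<Sum>l\<in>UNIV. (1/2) * csh l j (K!u) * pd i (\<lambda>y. F y (j # K[u:=l])) 0)"
    unfolding b by (simp add: sum.distrib)
  have s2: "(\<Sum>j\<in>UNIV. \<Sum>s<p. \<Sum>l\<in>UNIV. W i l j ((j#K)!s) * F 0 ((j#K)[s:=l]) + (1/2) * csh l j ((j#K)!s) * pd i (\<lambda>y. F y ((j#K)[s:=l])) 0)
     = (\<Sum>j\<in>UNIV. \<Sum>s<p. \<Sum>l\<in>UNIV. (1/2) * ddcs h i l j ((j#K)!s) * F 0 ((j#K)[s:=l]))
     - (\<Sum>j\<in>UNIV. \<Sum>s<p. \<Sum>l\<in>UNIV. \<Sum>r\<in>UNIV. ((1/2) * dd3 g i r j ((j#K)!s)) * (h 0 l r * F 0 ((j#K)[s:=l])))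
     + (\<Sum>j\<in>UNIV. \<Sum>s<p. \<Sum>l\<in>UNIV. (1/2) * csh l j ((j#K)!s) * pd i (\<lambda>y. F y ((j#K)[s:=l])) 0)"
    by (subst sum.cong[OF refl a]) (simp only: sum.distrib sum_subtractf)
  have "VCd i K = (\<Sum>j\<in>UNIV. \<Sum>k\<in>UNIV. pd i (\<lambda>y. h y j k) 0 * pd k (\<lambda>y. F y (j#K)) 0 + h 0 j k * CV 0 i k (j#K))
     + (\<Sum>j\<in>UNIV. \<Sum>s<p. \<Sum>l\<in>UNIV. W i l j ((j#K)!s) * F 0 ((j#K)[s:=l]) + (1/2) * csh l j ((j#K)!s) * pd i (\<lambda>y. F y ((j#K)[s:=l])) 0)"
    unfolding VCd_def jK ..
  then show ?thesis unfolding s1 s2 x0 z0 by simp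
qed

end


lemma swap3: "(\<Sum>j\<in>A. \<Sum>k\<in>B. a j k * (\<Sum>s\<in>C. b s * X s j k :: real)) = (\<Sum>s\<in>C. b s * (\<Sum>j\<in>A. \<Sum>k\<in>B. a j k * X s j k))"
proof -
  have "(\<Sum>j\<in>A. \<Sum>k\<in>B. a j k * (\<Sum>s\<in>C. b s * X s j k)) = (\<Sum>j\<in>A. \<Sum>k\<in>B. \<Sum>s\<in>C. b s * (a j k * X s j k))"
    by (simp add: sum_distrib_left mult.left_commute)
  also have "\<dots> = (\<Sum>j\<in>A. \<Sum>s\<in>C. \<Sum>k\<in>B. b s * (a j k * X s j k))"
    by (rule sum.cong[OF refl], rule sum.swap)
  also have "\<dots> = (\<Sum>s\<in>C. \<Sum>j\<in>A. \<Sum>k\<in>B. b s * (a j k * X s j k))"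
    by (rule sum.swap)
  also have "\<dots> = (\<Sum>s\<in>C. b s * (\<Sum>j\<in>A. \<Sum>k\<in>B. a j k * X s j k))"
    by (simp add: sum_distrib_left)
  finally show ?thesis .
qed

context NCH
begin

lemma schwF: assumes "length J = p"
  shows "pd a (pd b (\<lambda>y. F y J)) 0 = pd b (pd a (\<lambda>y. F y J)) 0"
proof (rule schwarz[OF openU zU])
  show "\<And>y. y \<in> U \<Longrightarrow> (\<lambda>y. F y J) differentiable (at y)" by (rule smooth_d0[OF Fsm[OF assms]])
  show "\<And>y. y \<in> U \<Longrightarrow> pd b (\<lambda>y. F y J) differentiable (at y)" by (rule smooth_d1[OF Fsm[OF assms]])
  show "\<And>y. y \<in> U \<Longrightarrow> pd a (\<lambda>y. F y J) differentiable (at y)" by (rule smooth_d1[OF Fsm[OF assms]])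
  show "isCont (pd a (pd b (\<lambda>y. F y J))) 0"
    using smooth_d2[OF Fsm[OF assms] zU] differentiable_imp_continuous_within by blast
  show "isCont (pd b (pd a (\<lambda>y. F y J))) 0"
    using smooth_d2[OF Fsm[OF assms] zU] differentiable_imp_continuous_within by blast
qed

lemma I1: "(\<Sum>j\<in>UNIV. \<Sum>k\<in>UNIV. h 0 j k * pd k (pd j (\<lambda>y. F y I)) 0) = (\<Sum>j\<in>UNIV. \<Sum>k\<in>UNIV. h 0 j k * pd j (pd k (\<lambda>y. F y I)) 0)"
  by (subst sum.swap) (simp add: hsym[OF zU])

lemma I2: assumes I: "length I = p"
  shows "(\<Sum>j\<in>UNIV. \<Sum>k\<in>UNIV. h 0 j k * (\<Sum>s<p. (-1)^(Suc s) * pd k (pd (I!s) (\<lambda>y. F y (j # del_at s I))) 0))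
    + (\<Sum>s<p. (-1)^s * (\<Sum>j\<in>UNIV. \<Sum>k\<in>UNIV. h 0 j k * pd (I!s) (pd k (\<lambda>y. F y (j # del_at s I))) 0)) = 0"
proof -
  have "pd (I!s) (pd k (\<lambda>y. F y (j # del_at s I))) 0 = pd k (pd (I!s) (\<lambda>y. F y (j # del_at s I))) 0" if "s < p" for s j k
    by (rule schwF) (use that I in simp)
  then have "(\<Sum>s<p. (-1)^s * (\<Sum>j\<in>UNIV. \<Sum>k\<in>UNIV. h 0 j k * pd (I!s) (pd k (\<lambda>y. F y (j # del_at s I))) 0))
     = (\<Sum>s<p. (-1)^s * (\<Sum>j\<in>UNIV. \<Sum>k\<in>UNIV. h 0 j k * pd k (pd (I!s) (\<lambda>y. F y (j # del_at s I))) 0))"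
    by (intro sum.cong refl) simp
  then show ?thesis unfolding swap3 by (simp add: sum.distrib[symmetric])
qed

lemma I3a: "(\<Sum>j\<in>UNIV. \<Sum>l\<in>UNIV. (1/2) * csh l j j * extd F 0 (l#I))
   = (\<Sum>j\<in>UNIV. \<Sum>l\<in>UNIV. (1/2) * csh l j j * pd l (\<lambda>y. F y I) 0)
   + (\<Sum>j\<in>UNIV. \<Sum>l\<in>UNIV. (1/2) * csh l j j * (\<Sum>t<length I. (-1)^(Suc t) * pd (I!t) (\<lambda>y. F y (l # del_at t I)) 0))"
  unfolding extd_cons by (simp add: ring_distribs sum.distrib)

lemma I3b: assumes I: "length I = p"
  shows "(\<Sum>j\<in>UNIV. \<Sum>l\<in>UNIV. (1/2) * csh l j j * (\<Sum>t<length I. (-1)^(Suc t) * pd (I!t) (\<lambda>y. F y (l # del_at t I)) 0))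
    + (\<Sum>s<p. (-1)^s * (\<Sum>j\<in>UNIV. \<Sum>l\<in>UNIV. (1/2) * csh l j j * pd (I!s) (\<lambda>y. F y (l # del_at s I)) 0)) = 0"
  unfolding swap3 I by (simp add: sum.distrib[symmetric])

lemma I4: assumes I: "length I = p"
  shows "(\<Sum>j\<in>UNIV. \<Sum>s<p. \<Sum>l\<in>UNIV. (1/2) * csh l j (I!s) * extd F 0 (j # I[s:=l]))
   = (\<Sum>j\<in>UNIV. \<Sum>s<p. \<Sum>l\<in>UNIV. (1/2) * csh l j (I!s) * pd j (\<lambda>y. F y (I[s:=l])) 0)
   + (\<Sum>j\<in>UNIV. \<Sum>s<p. \<Sum>l\<in>UNIV. (1/2) * csh l j (I!s) * ((-1)^(Suc s) * pd l (\<lambda>y. F y (j # del_at s I)) 0))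
   + (\<Sum>j\<in>UNIV. \<Sum>s<p. \<Sum>l\<in>UNIV. (1/2) * csh l j (I!s) * (\<Sum>t\<in>{..<p}-{s}. (-1)^(Suc t) * pd (I!t) (\<lambda>y. F y (j # del_at t (I[s:=l]))) 0))"
proof -
  have pt: "extd F 0 (j # I[s:=l]) = pd j (\<lambda>y. F y (I[s:=l])) 0 + (-1)^(Suc s) * pd l (\<lambda>y. F y (j # del_at s I)) 0
      + (\<Sum>t\<in>{..<p}-{s}. (-1)^(Suc t) * pd (I!t) (\<lambda>y. F y (j # del_at t (I[s:=l]))) 0)" if s: "s < p" for j s l
  proof -
    have "extd F 0 (j # I[s:=l]) = pd j (\<lambda>y. F y (I[s:=l])) 0 + (\<Sum>t<p. (-1)^(Suc t) * pd ((I[s:=l])!t) (\<lambda>y. F y (j # del_at t (I[s:=l]))) 0)"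
      unfolding extd_cons using I by simp
    also have "(\<Sum>t<p. (-1)^(Suc t) * pd ((I[s:=l])!t) (\<lambda>y. F y (j # del_at t (I[s:=l]))) 0)
        = (-1)^(Suc s) * pd l (\<lambda>y. F y (j # del_at s I)) 0
          + (\<Sum>t\<in>{..<p}-{s}. (-1)^(Suc t) * pd ((I[s:=l])!t) (\<lambda>y. F y (j # del_at t (I[s:=l]))) 0)"
      using s I by (subst sum.remove[of _ s]) auto
    also have "(\<Sum>t\<in>{..<p}-{s}. (-1)^(Suc t) * pd ((I[s:=l])!t) (\<lambda>y. F y (j # del_at t (I[s:=l]))) 0)
        = (\<Sum>t\<in>{..<p}-{s}. (-1)^(Suc t) * pd (I!t) (\<lambda>y. F y (j # del_at t (I[s:=l]))) 0)"
      by (rule sum.cong) auto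
    finally show ?thesis by simp
  qed
  have "(\<Sum>j\<in>UNIV. \<Sum>s<p. \<Sum>l\<in>UNIV. (1/2) * csh l j (I!s) * extd F 0 (j # I[s:=l]))
     = (\<Sum>j\<in>UNIV. \<Sum>s<p. \<Sum>l\<in>UNIV. (1/2) * csh l j (I!s) * pd j (\<lambda>y. F y (I[s:=l])) 0
        + (1/2) * csh l j (I!s) * ((-1)^(Suc s) * pd l (\<lambda>y. F y (j # del_at s I)) 0)
        + (1/2) * csh l j (I!s) * (\<Sum>t\<in>{..<p}-{s}. (-1)^(Suc t) * pd (I!t) (\<lambda>y. F y (j # del_at t (I[s:=l]))) 0))"
    by (intro sum.cong refl) (simp add: pt ring_distribs)
  then show ?thesis by (simp only: sum.distrib)
qed

lemma I7: assumes I: "length I = p"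
  shows "(\<Sum>s<p. (-1)^s * (\<Sum>j\<in>UNIV. \<Sum>l\<in>UNIV. (1/2) * ddcs h (I!s) l j j * F 0 (l # del_at s I)))
   = (\<Sum>j\<in>UNIV. \<Sum>k\<in>UNIV. \<Sum>s<length I. (-1)^s *
        (pd (I!s) (pd j (\<lambda>y. h y j k)) 0 - (1/2) * pd (I!s) (pd k (\<lambda>y. h y j j)) 0) * F 0 (k # del_at s I))"
proof -
  have e: "ddcs h i l j j = 2 * pd i (pd j (\<lambda>y. h y j l)) 0 - pd i (pd l (\<lambda>y. h y j j)) 0" for i l j
    using ddhsym[of i j l j] unfolding ddcs_def by simp
  have "(\<Sum>s<p. (-1)^s * (\<Sum>j\<in>UNIV. \<Sum>l\<in>UNIV. (1/2) * ddcs h (I!s) l j j * F 0 (l # del_at s I)))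
     = (\<Sum>s<p. \<Sum>j\<in>UNIV. \<Sum>l\<in>UNIV. (-1)^s * (pd (I!s) (pd j (\<lambda>y. h y j l)) 0 - (1/2) * pd (I!s) (pd l (\<lambda>y. h y j j)) 0) * F 0 (l # del_at s I))"
    by (simp add: sum_distrib_left e algebra_simps)
  also have "\<dots> = (\<Sum>j\<in>UNIV. \<Sum>s<p. \<Sum>l\<in>UNIV. (-1)^s * (pd (I!s) (pd j (\<lambda>y. h y j l)) 0 - (1/2) * pd (I!s) (pd l (\<lambda>y. h y j j)) 0) * F 0 (l # del_at s I))"
    by (rule sum.swap)
  also have "\<dots> = (\<Sum>j\<in>UNIV. \<Sum>l\<in>UNIV. \<Sum>s<p. (-1)^s * (pd (I!s) (pd j (\<lambda>y. h y j l)) 0 - (1/2) * pd (I!s) (pd l (\<lambda>y. h y j j)) 0) * F 0 (l # del_at s I))"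
    by (rule sum.cong[OF refl], rule sum.swap)
  finally show ?thesis using I by simp
qed

end


lemma offdiag_swap:
  "(\<Sum>s<(n::nat). \<Sum>t\<in>{..<n}-{s}. f s t) = (\<Sum>t<n. \<Sum>s\<in>{..<n}-{t}. (f s t :: real))"
proof -
  have "(\<Sum>s<n. \<Sum>t\<in>{..<n}-{s}. f s t) = (\<Sum>s<n. \<Sum>t<n. if t = s then 0 else f s t)"
    by (rule sum.cong[OF refl], rule sum_offdiag) simp
  also have "\<dots> = (\<Sum>t<n. \<Sum>s<n. if t = s then 0 else f s t)" by (rule sum.swap)
  also have "\<dots> = (\<Sum>t<n. \<Sum>s<n. if s = t then 0 else f s t)"
    by (intro sum.cong refl) auto
  also have "\<dots> = (\<Sum>t<n. \<Sum>s\<in>{..<n}-{t}. f s t)"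
    by (rule sum.cong[OF refl], rule sum_offdiag[symmetric]) simp
  finally show ?thesis .
qed

lemma swapU: "(\<Sum>j\<in>A. \<Sum>u\<in>B. \<Sum>l\<in>C. a j u l * (b u * X j u l)) = (\<Sum>u\<in>B. b u * (\<Sum>j\<in>A. \<Sum>l\<in>C. a j u l * (X j u l::real)))"
proof -
  have "(\<Sum>j\<in>A. \<Sum>u\<in>B. \<Sum>l\<in>C. a j u l * (b u * X j u l)) = (\<Sum>u\<in>B. \<Sum>j\<in>A. \<Sum>l\<in>C. a j u l * (b u * X j u l))"
    by (rule sum.swap)
  also have "\<dots> = (\<Sum>u\<in>B. b u * (\<Sum>j\<in>A. \<Sum>l\<in>C. a j u l * X j u l))"
    by (simp add: sum_distrib_left mult.left_commute)
  finally show ?thesis .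
qed

lemma reord: "(\<Sum>s\<in>S. a s * (\<Sum>t\<in>T s. b s t * (\<Sum>j\<in>A. \<Sum>l\<in>B. Y s t j l)))
   = (\<Sum>j\<in>A. \<Sum>l\<in>B. \<Sum>s\<in>S. \<Sum>t\<in>T s. a s * b s t * (Y s t j l::real))"
proof -
  have "(\<Sum>s\<in>S. a s * (\<Sum>t\<in>T s. b s t * (\<Sum>j\<in>A. \<Sum>l\<in>B. Y s t j l)))
     = (\<Sum>s\<in>S. \<Sum>t\<in>T s. \<Sum>j\<in>A. \<Sum>l\<in>B. a s * b s t * Y s t j l)"
    by (simp add: sum_distrib_left mult.assoc)
  also have "\<dots> = (\<Sum>s\<in>S. \<Sum>j\<in>A. \<Sum>t\<in>T s. \<Sum>l\<in>B. a s * b s t * Y s t j l)"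
    by (rule sum.cong[OF refl], rule sum.swap)
  also have "\<dots> = (\<Sum>s\<in>S. \<Sum>j\<in>A. \<Sum>l\<in>B. \<Sum>t\<in>T s. a s * b s t * Y s t j l)"
    by (rule sum.cong[OF refl], rule sum.cong[OF refl], rule sum.swap)
  also have "\<dots> = (\<Sum>j\<in>A. \<Sum>s\<in>S. \<Sum>l\<in>B. \<Sum>t\<in>T s. a s * b s t * Y s t j l)"
    by (rule sum.swap)
  also have "\<dots> = (\<Sum>j\<in>A. \<Sum>l\<in>B. \<Sum>s\<in>S. \<Sum>t\<in>T s. a s * b s t * Y s t j l)"
    by (rule sum.cong[OF refl], rule sum.swap)
  finally show ?thesis .
qed

context NCH
begin

lemma AS: assumes R: "length (j0 # l0 # R) = p"
  shows "(\<Sum>j\<in>UNIV. \<Sum>l\<in>UNIV. (1/2) * ddcs h i l j m * F 0 (j#l#R))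
       = (\<Sum>j\<in>UNIV. \<Sum>l\<in>UNIV. pd i (pd j (\<lambda>y. h y m l)) 0 * F 0 (j#l#R))"
proof -
  let ?P = "\<lambda>j l. F 0 (j#l#R)"
  let ?X = "\<lambda>j l. pd i (pd j (\<lambda>y. h y l m)) 0"
  let ?S = "\<lambda>j l. pd i (pd m (\<lambda>y. h y j l)) 0"
  have anti: "?P l j = - ?P j l" for j l using pform_sw01[OF pf zU, of l j R] R by simp
  have sw: "?S j l * ?P j l = - (?S l j * ?P l j)" for j l
    using anti[of l j] ddhsym[of i m j l] by simp
  have sw2: "?X l j * ?P j l = - (?X l j * ?P l j)" for j l
    using anti[of l j] by simp
  have S0: "(\<Sum>j\<in>UNIV. \<Sum>l\<in>UNIV. ?S j l * ?P j l) = 0"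
  proof -
    have "(\<Sum>j\<in>UNIV. \<Sum>l\<in>UNIV. ?S j l * ?P j l) = (\<Sum>l\<in>UNIV. \<Sum>j\<in>UNIV. ?S j l * ?P j l)" by (rule sum.swap)
    also have "\<dots> = (\<Sum>l\<in>UNIV. \<Sum>j\<in>UNIV. - (?S l j * ?P l j))"
      by (intro sum.cong refl) (rule sw)
    finally show ?thesis by (simp add: sum_negf)
  qed
  have Y: "(\<Sum>j\<in>UNIV. \<Sum>l\<in>UNIV. ?X l j * ?P j l) = - (\<Sum>j\<in>UNIV. \<Sum>l\<in>UNIV. ?X j l * ?P j l)"
  proof -
    have "(\<Sum>j\<in>UNIV. \<Sum>l\<in>UNIV. ?X l j * ?P j l) = (\<Sum>l\<in>UNIV. \<Sum>j\<in>UNIV. ?X l j * ?P j l)" by (rule sum.swap)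
    also have "\<dots> = (\<Sum>l\<in>UNIV. \<Sum>j\<in>UNIV. - (?X l j * ?P l j))"
      by (intro sum.cong refl) (rule sw2)
    finally show ?thesis by (simp add: sum_negf)
  qed
  have "(\<Sum>j\<in>UNIV. \<Sum>l\<in>UNIV. (1/2) * ddcs h i l j m * F 0 (j#l#R))
     = (1/2) * (\<Sum>j\<in>UNIV. \<Sum>l\<in>UNIV. ?X j l * ?P j l) + (1/2) * (\<Sum>j\<in>UNIV. \<Sum>l\<in>UNIV. ?S j l * ?P j l)
       - (1/2) * (\<Sum>j\<in>UNIV. \<Sum>l\<in>UNIV. ?X l j * ?P j l)"
    unfolding ddcs_def by (simp add: sum_distrib_left sum.distrib sum_subtractf algebra_simps)
  also have "\<dots> = (\<Sum>j\<in>UNIV. \<Sum>l\<in>UNIV. ?X j l * ?P j l)" unfolding S0 Y by simp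
  also have "\<dots> = (\<Sum>j\<in>UNIV. \<Sum>l\<in>UNIV. pd i (pd j (\<lambda>y. h y m l)) 0 * F 0 (j#l#R))"
  proof -
    have e: "?X j l = pd i (pd j (\<lambda>y. h y m l)) 0" for j l by (rule ddhsym)
    show ?thesis by (simp only: e)
  qed
  finally show ?thesis .
qed


lemma I8: assumes I: "length I = p"
  shows "(\<Sum>s<p. (-1)^s * (\<Sum>j\<in>UNIV. \<Sum>u<length (del_at s I). \<Sum>l\<in>UNIV.
            (1/2) * ddcs h (I!s) l j ((del_at s I)!u) * F 0 (j # (del_at s I)[u:=l])))
   = (\<Sum>j\<in>UNIV. \<Sum>k\<in>UNIV. \<Sum>s<length I. \<Sum>t\<in>{..<length I} - {s}.
        (-1)^(s + t + (if t > s then 1 else 0)) * pd (I!s) (pd j (\<lambda>y. h y (I!t) k)) 0 * F 0 (j # k # del_two s t I))"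
proof -
  have c1: "(\<Sum>j\<in>UNIV. \<Sum>u<length (del_at s I). \<Sum>l\<in>UNIV.
            (1/2) * ddcs h (I!s) l j ((del_at s I)!u) * F 0 (j # (del_at s I)[u:=l]))
     = (\<Sum>t\<in>{..<p} - {s}. (-1)^(t + (if t > s then 1 else 0)) *
          (\<Sum>j\<in>UNIV. \<Sum>l\<in>UNIV. pd (I!s) (pd j (\<lambda>y. h y (I!t) l)) 0 * F 0 (j # l # del_two s t I)))"
    if s: "s < p" for s
  proof -
    let ?K = "del_at s I"
    have lK: "length ?K = p - 1" using s I by simp
    have "(\<Sum>j\<in>UNIV. \<Sum>u<length ?K. \<Sum>l\<in>UNIV. (1/2) * ddcs h (I!s) l j (?K!u) * F 0 (j # ?K[u:=l]))
       = (\<Sum>j\<in>UNIV. \<Sum>u<length ?K. \<Sum>l\<in>UNIV. (1/2) * ddcs h (I!s) l j (?K!u) * ((-1)^u * F 0 (j # l # del_at u ?K)))"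
    proof (intro sum.cong refl)
      fix j u l assume u: "u \<in> {..<length ?K}"
      have "F 0 (j # ?K[u:=l]) = (-1)^u * F 0 (j # l # del_at u ?K)"
        by (rule pform_upd2[OF pf zU]) (use u s I in auto)
      then show "(1/2) * ddcs h (I!s) l j (?K!u) * F 0 (j # ?K[u:=l]) = (1/2) * ddcs h (I!s) l j (?K!u) * ((-1)^u * F 0 (j # l # del_at u ?K))"
        by simp
    qed
    also have "\<dots> = (\<Sum>u<length ?K. (-1)^u * (\<Sum>j\<in>UNIV. \<Sum>l\<in>UNIV. (1/2) * ddcs h (I!s) l j (?K!u) * F 0 (j # l # del_at u ?K)))"
      by (rule swapU)
    also have "\<dots> = (\<Sum>u<length ?K. (-1)^u * (\<Sum>j\<in>UNIV. \<Sum>l\<in>UNIV. pd (I!s) (pd j (\<lambda>y. h y (?K!u) l)) 0 * F 0 (j # l # del_at u ?K)))"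
    proof (rule sum.cong[OF refl])
      fix u assume u: "u \<in> {..<length ?K}"
      have "(\<Sum>j\<in>UNIV. \<Sum>l\<in>UNIV. (1/2) * ddcs h (I!s) l j (?K!u) * F 0 (j # l # del_at u ?K))
          = (\<Sum>j\<in>UNIV. \<Sum>l\<in>UNIV. pd (I!s) (pd j (\<lambda>y. h y (?K!u) l)) 0 * F 0 (j # l # del_at u ?K))"
        by (rule AS[of "I!s" "I!s"]) (use u s I in auto)
      then show "(-1)^u * (\<Sum>j\<in>UNIV. \<Sum>l\<in>UNIV. (1/2) * ddcs h (I!s) l j (?K!u) * F 0 (j # l # del_at u ?K))
          = (-1)^u * (\<Sum>j\<in>UNIV. \<Sum>l\<in>UNIV. pd (I!s) (pd j (\<lambda>y. h y (?K!u) l)) 0 * F 0 (j # l # del_at u ?K))"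
        by simp
    qed
    also have "\<dots> = (\<Sum>t\<in>{..<p} - {s}. (-1)^(ix s t) * (\<Sum>j\<in>UNIV. \<Sum>l\<in>UNIV. pd (I!s) (pd j (\<lambda>y. h y (?K!(ix s t)) l)) 0 * F 0 (j # l # del_at (ix s t) ?K)))"
      unfolding lK by (rule reidx[OF s])
    also have "\<dots> = (\<Sum>t\<in>{..<p} - {s}. (-1)^(t + (if t > s then 1 else 0)) *
          (\<Sum>j\<in>UNIV. \<Sum>l\<in>UNIV. pd (I!s) (pd j (\<lambda>y. h y (I!t) l)) 0 * F 0 (j # l # del_two s t I)))"
    proof (rule sum.cong[OF refl])
      fix t assume t: "t \<in> {..<p} - {s}"
      then have tt: "t < length I" "t \<noteq> s" and ss: "s < length I" using s I by auto
      show "(-1)^(ix s t) * (\<Sum>j\<in>UNIV. \<Sum>l\<in>UNIV. pd (I!s) (pd j (\<lambda>y. h y (?K!(ix s t)) l)) 0 * F 0 (j # l # del_at (ix s t) ?K))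
          = (-1)^(t + (if t > s then 1 else 0)) * (\<Sum>j\<in>UNIV. \<Sum>l\<in>UNIV. pd (I!s) (pd j (\<lambda>y. h y (I!t) l)) 0 * F 0 (j # l # del_two s t I))"
        using sign_ix[OF tt(2)] nth_del_ix[OF ss tt] del_del_two[OF ss tt] by simp
    qed
    finally show ?thesis .
  qed
  have "(\<Sum>s<p. (-1)^s * (\<Sum>j\<in>UNIV. \<Sum>u<length (del_at s I). \<Sum>l\<in>UNIV.
            (1/2) * ddcs h (I!s) l j ((del_at s I)!u) * F 0 (j # (del_at s I)[u:=l])))
     = (\<Sum>s<p. (-1)^s * (\<Sum>t\<in>{..<p} - {s}. (-1)^(t + (if t > s then 1 else 0)) *
          (\<Sum>j\<in>UNIV. \<Sum>l\<in>UNIV. pd (I!s) (pd j (\<lambda>y. h y (I!t) l)) 0 * F 0 (j # l # del_two s t I))))"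
    by (rule sum.cong[OF refl]) (simp only: c1 lessThan_iff)
  also have "\<dots> = (\<Sum>j\<in>UNIV. \<Sum>l\<in>UNIV. \<Sum>s<p. \<Sum>t\<in>{..<p} - {s}. (-1)^s * (-1)^(t + (if t > s then 1 else 0)) *
          (pd (I!s) (pd j (\<lambda>y. h y (I!t) l)) 0 * F 0 (j # l # del_two s t I)))"
    by (rule reord)
  also have "\<dots> = (\<Sum>j\<in>UNIV. \<Sum>k\<in>UNIV. \<Sum>s<length I. \<Sum>t\<in>{..<length I} - {s}.
        (-1)^(s + t + (if t > s then 1 else 0)) * pd (I!s) (pd j (\<lambda>y. h y (I!t) k)) 0 * F 0 (j # k # del_two s t I))"
    unfolding I by (intro sum.cong refl) (simp add: power_add)
  finally show ?thesis .
qed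


lemma I5: assumes I: "length I = p"
  shows "(\<Sum>j\<in>UNIV. \<Sum>s<p. \<Sum>l\<in>UNIV. (1/2) * csh l j (I!s) * (\<Sum>t\<in>{..<p}-{s}. (-1)^(Suc t) * pd (I!t) (\<lambda>y. F y (j # del_at t (I[s:=l]))) 0))
    + (\<Sum>s<p. (-1)^s * (\<Sum>j\<in>UNIV. \<Sum>u<length (del_at s I). \<Sum>l\<in>UNIV. (1/2) * csh l j ((del_at s I)!u) * pd (I!s) (\<lambda>y. F y (j # (del_at s I)[u:=l])) 0)) = 0"
proof -
  define \<Phi> where "\<Phi> s t = (\<Sum>j\<in>UNIV. \<Sum>l\<in>UNIV. (1/2) * csh l j (I!t) * pd (I!s) (\<lambda>y. F y (j # del_at s (I[t:=l]))) 0)" for s t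
  have r1: "(\<Sum>j\<in>UNIV. \<Sum>u<length (del_at s I). \<Sum>l\<in>UNIV. (1/2) * csh l j ((del_at s I)!u) * pd (I!s) (\<lambda>y. F y (j # (del_at s I)[u:=l])) 0)
      = (\<Sum>t\<in>{..<p}-{s}. \<Phi> s t)" if s: "s < p" for s
  proof -
    have lK: "length (del_at s I) = p - 1" using s I by simp
    have "(\<Sum>j\<in>UNIV. \<Sum>u<length (del_at s I). \<Sum>l\<in>UNIV. (1/2) * csh l j ((del_at s I)!u) * pd (I!s) (\<lambda>y. F y (j # (del_at s I)[u:=l])) 0)
        = (\<Sum>u<p - 1. \<Sum>j\<in>UNIV. \<Sum>l\<in>UNIV. (1/2) * csh l j ((del_at s I)!u) * pd (I!s) (\<lambda>y. F y (j # (del_at s I)[u:=l])) 0)"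
      unfolding lK by (rule sum.swap)
    also have "\<dots> = (\<Sum>t\<in>{..<p}-{s}. \<Sum>j\<in>UNIV. \<Sum>l\<in>UNIV. (1/2) * csh l j ((del_at s I)!(ix s t)) * pd (I!s) (\<lambda>y. F y (j # (del_at s I)[ix s t:=l])) 0)"
      by (rule reidx[OF s])
    also have "\<dots> = (\<Sum>t\<in>{..<p}-{s}. \<Phi> s t)"
    proof (rule sum.cong[OF refl])
      fix t assume t: "t \<in> {..<p} - {s}"
      then have tt: "t < length I" "t \<noteq> s" and ss: "s < length I" using s I by auto
      show "(\<Sum>j\<in>UNIV. \<Sum>l\<in>UNIV. (1/2) * csh l j ((del_at s I)!(ix s t)) * pd (I!s) (\<lambda>y. F y (j # (del_at s I)[ix s t:=l])) 0) = \<Phi> s t"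
        unfolding \<Phi>_def using nth_del_ix[OF ss tt] upd_del_ix[OF ss tt] by simp
    qed
    finally show ?thesis .
  qed
  have r2: "(\<Sum>j\<in>UNIV. \<Sum>s<p. \<Sum>l\<in>UNIV. (1/2) * csh l j (I!s) * (\<Sum>t\<in>{..<p}-{s}. (-1)^(Suc t) * pd (I!t) (\<lambda>y. F y (j # del_at t (I[s:=l]))) 0))
      = (\<Sum>s<p. 1 * (\<Sum>t\<in>{..<p}-{s}. (-1)^(Suc t) * \<Phi> t s))"
  proof -
    have "(\<Sum>s<p. 1 * (\<Sum>t\<in>{..<p}-{s}. (-1)^(Suc t) * \<Phi> t s))
       = (\<Sum>j\<in>UNIV. \<Sum>l\<in>UNIV. \<Sum>s<p. \<Sum>t\<in>{..<p}-{s}. 1 * (-1)^(Suc t) * ((1/2) * csh l j (I!s) * pd (I!t) (\<lambda>y. F y (j # del_at t (I[s:=l]))) 0))"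
      unfolding \<Phi>_def by (rule reord)
    also have "\<dots> = (\<Sum>j\<in>UNIV. \<Sum>s<p. \<Sum>l\<in>UNIV. \<Sum>t\<in>{..<p}-{s}. 1 * (-1)^(Suc t) * ((1/2) * csh l j (I!s) * pd (I!t) (\<lambda>y. F y (j # del_at t (I[s:=l]))) 0))"
      by (rule sum.cong[OF refl], rule sum.swap)
    also have "\<dots> = (\<Sum>j\<in>UNIV. \<Sum>s<p. \<Sum>l\<in>UNIV. (1/2) * csh l j (I!s) * (\<Sum>t\<in>{..<p}-{s}. (-1)^(Suc t) * pd (I!t) (\<lambda>y. F y (j # del_at t (I[s:=l]))) 0))"
      by (simp add: sum_distrib_left algebra_simps)
    finally show ?thesis by simp
  qed
  have r3: "(\<Sum>s<p. 1 * (\<Sum>t\<in>{..<p}-{s}. (-1)^(Suc t) * \<Phi> t s)) = (\<Sum>s<p. \<Sum>t\<in>{..<p}-{s}. - ((-1)^s * \<Phi> s t))"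
    using offdiag_swap[of "\<lambda>s t. (-1)^(Suc t) * \<Phi> t s" p] by simp
  have "(\<Sum>s<p. (-1)^s * (\<Sum>j\<in>UNIV. \<Sum>u<length (del_at s I). \<Sum>l\<in>UNIV. (1/2) * csh l j ((del_at s I)!u) * pd (I!s) (\<lambda>y. F y (j # (del_at s I)[u:=l])) 0))
     = (\<Sum>s<p. \<Sum>t\<in>{..<p}-{s}. (-1)^s * \<Phi> s t)"
    by (rule sum.cong[OF refl]) (simp only: r1 lessThan_iff sum_distrib_left)
  then show ?thesis unfolding r2 r3 by (simp add: sum_negf)
qed

lemma I6: assumes I: "length I = p"
  shows "(\<Sum>j\<in>UNIV. \<Sum>s<p. \<Sum>l\<in>UNIV. (1/2) * csh l j (I!s) * pd j (\<lambda>y. F y (I[s:=l])) 0)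
   + (\<Sum>j\<in>UNIV. \<Sum>s<p. \<Sum>l\<in>UNIV. (1/2) * csh l j (I!s) * ((-1)^(Suc s) * pd l (\<lambda>y. F y (j # del_at s I)) 0))
   + (\<Sum>s<p. (-1)^s * (\<Sum>j\<in>UNIV. \<Sum>k\<in>UNIV. pd (I!s) (\<lambda>y. h y j k) 0 * pd k (\<lambda>y. F y (j # del_at s I)) 0))
   = (\<Sum>j\<in>UNIV. \<Sum>k\<in>UNIV. \<Sum>s<length I. (-1)^s *
        (pd (I!s) (\<lambda>y. h y j k) 0 + pd j (\<lambda>y. h y (I!s) k) 0 - pd k (\<lambda>y. h y (I!s) j) 0)
        * pd j (\<lambda>y. F y (k # del_at s I)) 0)"
  (is "?P + ?Q + ?A = ?C")
proof -
  have P: "?P = (1/2) * ?C"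
    using B3[OF I] by (simp add: sum_divide_distrib[symmetric])
  have Q: "?Q = (\<Sum>j\<in>UNIV. \<Sum>k\<in>UNIV. \<Sum>s<p. (1/2) * csh j k (I!s) * ((-1)^(Suc s) * pd j (\<lambda>y. F y (k # del_at s I)) 0))"
  proof -
    have "?Q = (\<Sum>k\<in>UNIV. \<Sum>j\<in>UNIV. \<Sum>s<p. (1/2) * csh j k (I!s) * ((-1)^(Suc s) * pd j (\<lambda>y. F y (k # del_at s I)) 0))"
      by (rule sum.cong[OF refl], rule sum.swap)
    also have "\<dots> = (\<Sum>j\<in>UNIV. \<Sum>k\<in>UNIV. \<Sum>s<p. (1/2) * csh j k (I!s) * ((-1)^(Suc s) * pd j (\<lambda>y. F y (k # del_at s I)) 0))"
      by (rule sum.swap)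
    finally show ?thesis .
  qed
  have A: "?A = (\<Sum>j\<in>UNIV. \<Sum>k\<in>UNIV. \<Sum>s<p. (-1)^s * (pd (I!s) (\<lambda>y. h y k j) 0 * pd j (\<lambda>y. F y (k # del_at s I)) 0))"
  proof -
    have "?A = (\<Sum>s<p. \<Sum>j\<in>UNIV. \<Sum>k\<in>UNIV. (-1)^s * (pd (I!s) (\<lambda>y. h y j k) 0 * pd k (\<lambda>y. F y (j # del_at s I)) 0))"
      by (simp add: sum_distrib_left)
    also have "\<dots> = (\<Sum>j\<in>UNIV. \<Sum>s<p. \<Sum>k\<in>UNIV. (-1)^s * (pd (I!s) (\<lambda>y. h y j k) 0 * pd k (\<lambda>y. F y (j # del_at s I)) 0))"
      by (rule sum.swap)
    also have "\<dots> = (\<Sum>j\<in>UNIV. \<Sum>k\<in>UNIV. \<Sum>s<p. (-1)^s * (pd (I!s) (\<lambda>y. h y j k) 0 * pd k (\<lambda>y. F y (j # del_at s I)) 0))"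
      by (rule sum.cong[OF refl], rule sum.swap)
    also have "\<dots> = (\<Sum>k\<in>UNIV. \<Sum>j\<in>UNIV. \<Sum>s<p. (-1)^s * (pd (I!s) (\<lambda>y. h y j k) 0 * pd k (\<lambda>y. F y (j # del_at s I)) 0))"
      by (rule sum.swap)
    finally show ?thesis by simp
  qed
  have QA: "?Q + ?A = (1/2) * ?C"
  proof -
    have "?Q + ?A = (\<Sum>j\<in>UNIV. \<Sum>k\<in>UNIV. \<Sum>s<p. (1/2) * csh j k (I!s) * ((-1)^(Suc s) * pd j (\<lambda>y. F y (k # del_at s I)) 0)
        + (-1)^s * (pd (I!s) (\<lambda>y. h y k j) 0 * pd j (\<lambda>y. F y (k # del_at s I)) 0))"
      unfolding Q A by (simp only: sum.distrib[symmetric])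
    also have "\<dots> = (\<Sum>j\<in>UNIV. \<Sum>k\<in>UNIV. \<Sum>s<p. (1/2) * ((-1)^s *
        (pd (I!s) (\<lambda>y. h y j k) 0 + pd j (\<lambda>y. h y (I!s) k) 0 - pd k (\<lambda>y. h y (I!s) j) 0)
        * pd j (\<lambda>y. F y (k # del_at s I)) 0))"
    proof (intro sum.cong refl)
      fix j k s
      have e1: "pd (I!s) (\<lambda>y. h y k j) 0 = pd (I!s) (\<lambda>y. h y j k) 0" by (rule dhsym)
      have e2: "pd k (\<lambda>y. h y j (I!s)) 0 = pd k (\<lambda>y. h y (I!s) j) 0" by (rule dhsym)
      have e3: "pd j (\<lambda>y. h y k (I!s)) 0 = pd j (\<lambda>y. h y (I!s) k) 0" by (rule dhsym)
      show "(1/2) * csh j k (I!s) * ((-1)^(Suc s) * pd j (\<lambda>y. F y (k # del_at s I)) 0)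
        + (-1)^s * (pd (I!s) (\<lambda>y. h y k j) 0 * pd j (\<lambda>y. F y (k # del_at s I)) 0)
        = (1/2) * ((-1)^s * (pd (I!s) (\<lambda>y. h y j k) 0 + pd j (\<lambda>y. h y (I!s) k) 0 - pd k (\<lambda>y. h y (I!s) j) 0)
        * pd j (\<lambda>y. F y (k # del_at s I)) 0)"
        unfolding csh_def e1 e2 e3 by (simp add: algebra_simps)
    qed
    also have "\<dots> = (1/2) * ?C" using I by (simp add: sum_distrib_left)
    finally show ?thesis .
  qed
  show ?thesis using P QA by simp
qed

end


definition JD :: "'n::finite metric \<Rightarrow> 'n metric \<Rightarrow> 'n form \<Rightarrow> 'n list \<Rightarrow> real" where
  "JD g h F I = - (\<Sum>s<length I. (-1)^s * (\<Sum>j\<in>UNIV. \<Sum>k\<in>UNIV. \<Sum>s'<length I. \<Sum>l\<in>UNIV.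
        ((1/2) * dd3 g (I!s) l k ((j # del_at s I)!s')) * (h 0 j k * F 0 ((j # del_at s I)[s':=l]))))
     - (\<Sum>s<length I. (-1)^s * (\<Sum>j\<in>UNIV. \<Sum>s'<length I. \<Sum>l\<in>UNIV. \<Sum>r\<in>UNIV.
        ((1/2) * dd3 g (I!s) r j ((j # del_at s I)!s')) * (h 0 l r * F 0 ((j # del_at s I)[s':=l]))))"

lemma lo_JD: "lo U (length I) (\<lambda>h F. JD g h F I)"
  unfolding JD_def
  by (intro lo_diff lo_neg lo_sumU lo_sumL lo_scale lo_atom0) (auto split: nat.split)

context NCH
begin

lemma derham_eq: assumes I: "length I = p"
  shows "derham_var g h F 0 I - derham_terms h F I = JD g h F I"
proof -
  let ?K = "\<lambda>s. del_at s I"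
  have T1a: "(\<Sum>j\<in>UNIV. \<Sum>k\<in>UNIV. h 0 j k * pd k (\<lambda>y. extd F y (j#I)) 0)
     = (\<Sum>j\<in>UNIV. \<Sum>k\<in>UNIV. h 0 j k * pd k (pd j (\<lambda>y. F y I)) 0)
     + (\<Sum>j\<in>UNIV. \<Sum>k\<in>UNIV. h 0 j k * (\<Sum>s<p. (-1)^(Suc s) * pd k (pd (I!s) (\<lambda>y. F y (j # del_at s I))) 0))"
    by (simp only: E1[OF I] ring_distribs sum.distrib)
  have T1b: "(\<Sum>j\<in>UNIV. \<Sum>s<Suc (length I). \<Sum>l\<in>UNIV. (1/2) * csh l j ((j#I)!s) * extd F 0 ((j#I)[s:=l]))
     = (\<Sum>j\<in>UNIV. \<Sum>l\<in>UNIV. (1/2) * csh l j j * extd F 0 (l#I))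
     + (\<Sum>j\<in>UNIV. \<Sum>s<p. \<Sum>l\<in>UNIV. (1/2) * csh l j (I!s) * extd F 0 (j # I[s:=l]))"
    unfolding sum.lessThan_Suc_shift I by (simp add: sum.distrib)
  have T2s: "(\<Sum>s<p. (-1)^s * VCd (I!s) (del_at s I)) =
      (\<Sum>s<p. (-1)^s * (\<Sum>j\<in>UNIV. \<Sum>k\<in>UNIV. pd (I!s) (\<lambda>y. h y j k) 0 * pd k (\<lambda>y. F y (j # ?K s)) 0))
    + (\<Sum>s<p. (-1)^s * (\<Sum>j\<in>UNIV. \<Sum>k\<in>UNIV. h 0 j k * pd (I!s) (pd k (\<lambda>y. F y (j # ?K s))) 0))
    - (\<Sum>s<p. (-1)^s * (\<Sum>j\<in>UNIV. \<Sum>k\<in>UNIV. \<Sum>s'<p. \<Sum>l\<in>UNIV. ((1/2) * dd3 g (I!s) l k ((j # ?K s)!s')) * (h 0 j k * F 0 ((j # ?K s)[s':=l]))))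
    + (\<Sum>s<p. (-1)^s * (\<Sum>j\<in>UNIV. \<Sum>l\<in>UNIV. (1/2) * ddcs h (I!s) l j j * F 0 (l # ?K s)))
    + (\<Sum>s<p. (-1)^s * (\<Sum>j\<in>UNIV. \<Sum>u<length (?K s). \<Sum>l\<in>UNIV. (1/2) * ddcs h (I!s) l j ((?K s)!u) * F 0 (j # (?K s)[u:=l])))
    - (\<Sum>s<p. (-1)^s * (\<Sum>j\<in>UNIV. \<Sum>s'<p. \<Sum>l\<in>UNIV. \<Sum>r\<in>UNIV. ((1/2) * dd3 g (I!s) r j ((j # ?K s)!s')) * (h 0 l r * F 0 ((j # ?K s)[s':=l]))))
    + (\<Sum>s<p. (-1)^s * (\<Sum>j\<in>UNIV. \<Sum>l\<in>UNIV. (1/2) * csh l j j * pd (I!s) (\<lambda>y. F y (l # ?K s)) 0))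
    + (\<Sum>s<p. (-1)^s * (\<Sum>j\<in>UNIV. \<Sum>u<length (?K s). \<Sum>l\<in>UNIV. (1/2) * csh l j ((?K s)!u) * pd (I!s) (\<lambda>y. F y (j # (?K s)[u:=l])) 0))"
  proof -
    have "(\<Sum>s<p. (-1)^s * VCd (I!s) (del_at s I)) = (\<Sum>s<p.
         (-1)^s * (\<Sum>j\<in>UNIV. \<Sum>k\<in>UNIV. pd (I!s) (\<lambda>y. h y j k) 0 * pd k (\<lambda>y. F y (j # ?K s)) 0)
       + (-1)^s * (\<Sum>j\<in>UNIV. \<Sum>k\<in>UNIV. h 0 j k * pd (I!s) (pd k (\<lambda>y. F y (j # ?K s))) 0)
       - (-1)^s * (\<Sum>j\<in>UNIV. \<Sum>k\<in>UNIV. \<Sum>s'<p. \<Sum>l\<in>UNIV. ((1/2) * dd3 g (I!s) l k ((j # ?K s)!s')) * (h 0 j k * F 0 ((j # ?K s)[s':=l])))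
       + (-1)^s * (\<Sum>j\<in>UNIV. \<Sum>l\<in>UNIV. (1/2) * ddcs h (I!s) l j j * F 0 (l # ?K s))
       + (-1)^s * (\<Sum>j\<in>UNIV. \<Sum>u<length (?K s). \<Sum>l\<in>UNIV. (1/2) * ddcs h (I!s) l j ((?K s)!u) * F 0 (j # (?K s)[u:=l]))
       - (-1)^s * (\<Sum>j\<in>UNIV. \<Sum>s'<p. \<Sum>l\<in>UNIV. \<Sum>r\<in>UNIV. ((1/2) * dd3 g (I!s) r j ((j # ?K s)!s')) * (h 0 l r * F 0 ((j # ?K s)[s':=l])))
       + (-1)^s * (\<Sum>j\<in>UNIV. \<Sum>l\<in>UNIV. (1/2) * csh l j j * pd (I!s) (\<lambda>y. F y (l # ?K s)) 0)
       + (-1)^s * (\<Sum>j\<in>UNIV. \<Sum>u<length (?K s). \<Sum>l\<in>UNIV. (1/2) * csh l j ((?K s)!u) * pd (I!s) (\<lambda>y. F y (j # (?K s)[u:=l])) 0))"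
    proof (rule sum.cong[OF refl], goal_cases)
      case (1 s)
      then have "Suc (length (del_at s I)) = p" using I by auto
      then show ?case
        by (simp only: VCd_split ring_distribs)
    qed
    then show ?thesis by (simp only: sum.distrib sum_subtractf)
  qed
  have main: "derham_var g h F 0 I =
      (\<Sum>j\<in>UNIV. \<Sum>k\<in>UNIV. h 0 j k * pd k (\<lambda>y. extd F y (j#I)) 0)
    + (\<Sum>j\<in>UNIV. \<Sum>s<Suc (length I). \<Sum>l\<in>UNIV. (1/2) * csh l j ((j#I)!s) * extd F 0 ((j#I)[s:=l]))
    + (\<Sum>s<p. (-1)^s * VCd (I!s) (del_at s I))"
    unfolding derham_var_def T1_val T2val[OF I] ..
  show ?thesis
    unfolding main T1a T1b T2s I3a I4[OF I] derham_terms_def common_terms_def JD_def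
    using I1 I2[OF I] I3b[OF I] B2 I5[OF I] I6[OF I] I7[OF I] I8[OF I] I
    by simp
qed

end

lemma derham_half:
  assumes "normal_coords g U"
  shows "sim_at U (length I) (\<lambda>h F. derham_var g h F 0 I) (\<lambda>h F. derham_terms h F I)"
  unfolding sim_at_lo
proof (rule lo_cong[OF lo_JD])
  fix h F assume "sym_tensor h U" "pform (length I) F U"
  then have "NCH g U h F (length I)" using assms by (intro NCH.intro NC.intro NCH_axioms.intro)
  then show "derham_var g h F 0 I - derham_terms h F I = JD g h F I" by (rule NCH.derham_eq) simp
qed

theorem lemma3p1:
  fixes g :: "'n::finite metric" and U :: "(real^'n) set" and I :: "'n list"
  assumes "normal_coords g U"
  shows "sim_at U (length I) (\<lambda>h F. var bochner g h F 0 I) (\<lambda>h F. bochner_terms h F I)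
       \<and> sim_at U (length I) (\<lambda>h F. derham_var g h F 0 I) (\<lambda>h F. derham_terms h F I)"
  using bochner_half[OF assms] derham_half[OF assms] by blast


end
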